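(* Fix either version $B=X$ or $B=D$ and an admissible order ideal $\mathcal I$ in $\mathcal P$. Let $0<\varepsilon<1$ and let $L$ be an upper bound for the lengths of the flags in $\Delta(\mathcal I)$. Then for every $A\in B[\mathbb I]$ with $\kappa(A)<\varepsilon^L$ there exist a flag $\varphi=(\mathfrak f(1)\supsetneq\dots\supsetneq\mathfrak f(m))\in\Delta(\mathcal I)$ of length $m>0$ and an operator $B\in B[\mathfrak f(1)]$ such that $|B-\bar\chi^{\mathfrak f(1)}|<\varepsilon$ and $A$ lies in the convex hull (a simplex) of $\{B\}\cup\{\bar\chi^{\mathfrak f(s)}:2\le s\le m\}$.
   Context: $\mathfrak g$ is the Lie algebra of a compact Lie group with Euclidean inner product $Q$ satisfying $Q([X,Y],Z)=Q(X,[Y,Z])$; linear operators are symmetric if $Q(AX,Y)=Q(X,AY)$; $|A|=\sqrt{\mathrm{tr}(A^2)}$ for symmetric $A$. For symmetric $A$, $F_a$ is the span of eigenvectors with eigenvalue $\le a$; $A$ is filtering if $[F_a,F_b]\subseteq F_{a+b}$ for all $a,b$; $\mathfrak F_+$ = filtering symmetric operators with nonnegative spectrum and trace $1$. $\mathfrak h\subsetneq\mathfrak g$ fixed subalgebra, $\mathcal A$ a compact group of automorphisms of $\mathfrak g$ preserving $\mathfrak h$ and $Q$. $\mathcal P$ = set of $\mathcal A$-invariant subalgebras $\mathfrak k$ with $\mathfrak h\subsetneq\mathfrak k\subseteq\mathfrak g$. Admissible order ideal: $\mathcal I\subseteq\mathcal P$ closed under passing to smaller members of $\mathcal P$, $\mathfrak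 g\notin\mathcal I$, $\mathcal I$ and $\mathcal P\setminus\mathcal I$ compact semialgebraic (in the disjoint union of Grassmannians). For $\mathfrak k\in\mathcal P\setminus\{\mathfrak g\}$: $\bar\chi^{\mathfrak k}=\frac{1}{\dim(\mathfrak g/\mathfrak k)}(1_{\mathfrak g}-1_{\mathfrak k})$ ($Q$-orthogonal projections); $D[\mathfrak k]$ = symmetric operators with nonnegative spectrum, trace $1$, commuting with $\mathcal A$, annihilating $\mathfrak k$, commuting with $\mathrm{ad}(X)$ for $X\in\mathfrak k$; $X[\mathfrak k]=D[\mathfrak k]\cap\mathfrak F_+$; $D[\mathfrak g]=X[\mathfrak g]=\emptyset$. Flags $\varphi=(\mathfrak f_1\supsetneq\dots\supsetneq\mathfrak f_r)$, $r\ge1$, $\mathfrak f_i\in\mathcal P$, $\max\varphi=\mathfrak f_1$; $\Delta(\mathcal S)$ = flags with members in $\mathcal S$; $/\chi/$ = convex hull of $\{\bar\chi^{\mathfrak f}:\mathfrak f\in\chi\}$. Butterflies: $B[(\mathfrak f)]=B[\mathfrak f]$; if $r>1$, $\mathfrak f_1=\mathfrak g$: $B[\varphi]=/(\mathfrak f_2,\dots,\mathfrak f_r)/$; if $r>1$, $\mathfrak f_1\ne\mathfrak g$: the union of closed segments joining $B[\mathfrak f_1]$ to $/(\mathfrak f_2,\dots,\mathfrak f_r)/$, which is the join of these sets. $\mathbb I=\{\varphi\in\Delta(\mathcal P)\setminus\Delta(\mathcal I):\varphi\setminus\{\max\varphi\}\subseteq\mathcal I\}$, $B[\mathbb I]=\bigcup_{\varphi\in\mathbb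 I}B[\varphi]$. The function $\kappa:B[\mathbb I]\to[0,1]$: for $A\in B[\varphi]$, $\varphi\in\mathbb I$, put $\kappa(A)=0$ if $\max\varphi=\mathfrak g$, $\kappa(A)=1$ if $\varphi$ has length $1$, and otherwise $\kappa(A)$ is the number with $A=(1-\kappa)A_1+\kappa A_2$, $A_1\in/(\mathfrak f_2,\dots,\mathfrak f_r)/$, $A_2\in B[\mathfrak f_1]$ (this value does not depend on the choice of $\varphi$). *)

theory Defs
  imports "HOL-Analysis.Analysis"
begin

(* The Lie algebra g is modelled as a euclidean_space type 'a; Q is its inner product;
   the bracket is a function br. Operators are bounded linear maps 'a \<Rightarrow>\<^sub>L 'a. *)

definition lie_algebra_with_invariant_Q :: "('a::euclidean_space \<Rightarrow> 'a \<Rightarrow> 'a) \<Rightarrow> bool" where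
  "lie_algebra_with_invariant_Q br \<longleftrightarrow>
     bilinear br \<and>
     (\<forall>x. br x x = 0) \<and>
     (\<forall>x y z. br x (br y z) + br y (br z x) + br z (br x y) = 0) \<and>
     (\<forall>x y z. inner (br x y) z = inner x (br y z))"

definition subalgebra :: "('a::euclidean_space \<Rightarrow> 'a \<Rightarrow> 'a) \<Rightarrow> 'a set \<Rightarrow> bool" where
  "subalgebra br k \<longleftrightarrow> subspace k \<and> (\<forall>x\<in>k. \<forall>y\<in>k. br x y \<in> k)"

definition automorphism_group ::
  "('a::euclidean_space \<Rightarrow> 'a \<Rightarrow> 'a) \<Rightarrow> 'a set \<Rightarrow> ('a \<Rightarrow>\<^sub>L 'a) set \<Rightarrow> bool" where
  "automorphism_group br h Aut \<longleftrightarrow>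
     id_blinfun \<in> Aut \<and>
     (\<forall>\<sigma>\<in>Aut. \<forall>\<tau>\<in>Aut. \<sigma> o\<^sub>L \<tau> \<in> Aut) \<and>
     (\<forall>\<sigma>\<in>Aut. \<exists>\<tau>\<in>Aut. \<sigma> o\<^sub>L \<tau> = id_blinfun \<and> \<tau> o\<^sub>L \<sigma> = id_blinfun) \<and>
     (\<forall>\<sigma>\<in>Aut. \<forall>x y. \<sigma> (br x y) = br (\<sigma> x) (\<sigma> y)) \<and>
     (\<forall>\<sigma>\<in>Aut. \<forall>x y. inner (\<sigma> x) (\<sigma> y) = inner x y) \<and>
     (\<forall>\<sigma>\<in>Aut. blinfun_apply \<sigma> ` h = h) \<and>
     compact Aut"

definition Pset :: "('a::euclidean_space \<Rightarrow> 'a \<Rightarrow> 'a) \<Rightarrow> ('a \<Rightarrow>\<^sub>L 'a) set \<Rightarrow> 'a set \<Rightarrow> 'a set set" where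
  "Pset br Aut h = {k. subalgebra br k \<and> (\<forall>\<sigma>\<in>Aut. blinfun_apply \<sigma> ` k \<subseteq> k) \<and> h \<subset> k}"

definition projop :: "'a::euclidean_space set \<Rightarrow> 'a \<Rightarrow>\<^sub>L 'a" where
  "projop k = Blinfun (closest_point k)"

definition trace_op :: "('a::euclidean_space \<Rightarrow>\<^sub>L 'a) \<Rightarrow> real" where
  "trace_op A = (\<Sum>b\<in>Basis. inner (A b) b)"

definition opnorm2 :: "('a::euclidean_space \<Rightarrow>\<^sub>L 'a) \<Rightarrow> real" where
  "opnorm2 A = sqrt (trace_op (A o\<^sub>L A))"

definition symmetric_op :: "('a::euclidean_space \<Rightarrow>\<^sub>L 'a) \<Rightarrow> bool" where
  "symmetric_op A \<longleftrightarrow> (\<forall>x y. inner (A x) y = inner x (A y))"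

definition nonneg_spectrum :: "('a::euclidean_space \<Rightarrow>\<^sub>L 'a) \<Rightarrow> bool" where
  "nonneg_spectrum A \<longleftrightarrow> (\<forall>c x. x \<noteq> 0 \<longrightarrow> A x = c *\<^sub>R x \<longrightarrow> 0 \<le> c)"

definition Fsub :: "('a::euclidean_space \<Rightarrow>\<^sub>L 'a) \<Rightarrow> real \<Rightarrow> 'a set" where
  "Fsub A a = span {x. x \<noteq> 0 \<and> (\<exists>c\<le>a. A x = c *\<^sub>R x)}"

definition filtering :: "('a::euclidean_space \<Rightarrow> 'a \<Rightarrow> 'a) \<Rightarrow> ('a \<Rightarrow>\<^sub>L 'a) \<Rightarrow> bool" where
  "filtering br A \<longleftrightarrow> (\<forall>a b. \<forall>x\<in>Fsub A a. \<forall>y\<in>Fsub A b. br x y \<in> Fsub A (a + b))"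

definition Fplus :: "('a::euclidean_space \<Rightarrow> 'a \<Rightarrow> 'a) \<Rightarrow> ('a \<Rightarrow>\<^sub>L 'a) set" where
  "Fplus br = {A. symmetric_op A \<and> filtering br A \<and> nonneg_spectrum A \<and> trace_op A = 1}"

definition chibar :: "'a::euclidean_space set \<Rightarrow> 'a \<Rightarrow>\<^sub>L 'a" where
  "chibar k = (1 / real (DIM('a) - dim k)) *\<^sub>R (id_blinfun - projop k)"

definition Dset :: "('a::euclidean_space \<Rightarrow> 'a \<Rightarrow> 'a) \<Rightarrow> ('a \<Rightarrow>\<^sub>L 'a) set \<Rightarrow> 'a set \<Rightarrow> ('a \<Rightarrow>\<^sub>L 'a) set" where
  "Dset br Aut k = {A. k \<noteq> UNIV \<and> symmetric_op A \<and> nonneg_spectrum A \<and> trace_op A = 1 \<and>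
      (\<forall>\<sigma>\<in>Aut. A o\<^sub>L \<sigma> = \<sigma> o\<^sub>L A) \<and>
      (\<forall>x\<in>k. A x = 0) \<and>
      (\<forall>X\<in>k. \<forall>Y. A (br X Y) = br X (A Y))}"

definition Xset :: "('a::euclidean_space \<Rightarrow> 'a \<Rightarrow> 'a) \<Rightarrow> ('a \<Rightarrow>\<^sub>L 'a) set \<Rightarrow> 'a set \<Rightarrow> ('a \<Rightarrow>\<^sub>L 'a) set" where
  "Xset br Aut k = Dset br Aut k \<inter> Fplus br"

inductive poly_op :: "(('a::euclidean_space \<Rightarrow>\<^sub>L 'a) \<Rightarrow> real) \<Rightarrow> bool" where
  poly_const: "poly_op (\<lambda>A. c)"
| poly_coord: "b \<in> Basis \<Longrightarrow> b' \<in> Basis \<Longrightarrow> poly_op (\<lambda>A. inner (A b) b')"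
| poly_add: "poly_op p \<Longrightarrow> poly_op q \<Longrightarrow> poly_op (\<lambda>A. p A + q A)"
| poly_mult: "poly_op p \<Longrightarrow> poly_op q \<Longrightarrow> poly_op (\<lambda>A. p A * q A)"

inductive semialgebraic_ops :: "('a::euclidean_space \<Rightarrow>\<^sub>L 'a) set \<Rightarrow> bool" where
  sa_eq: "poly_op p \<Longrightarrow> semialgebraic_ops {A. p A = 0}"
| sa_pos: "poly_op p \<Longrightarrow> semialgebraic_ops {A. 0 < p A}"
| sa_un: "semialgebraic_ops S \<Longrightarrow> semialgebraic_ops T \<Longrightarrow> semialgebraic_ops (S \<union> T)"
| sa_compl: "semialgebraic_ops S \<Longrightarrow> semialgebraic_ops (- S)"

(* a family of subspaces, viewed in the disjoint union of Grassmannians via orthogonal projections *)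
definition compact_semialgebraic_family :: "'a::euclidean_space set set \<Rightarrow> bool" where
  "compact_semialgebraic_family S \<longleftrightarrow> compact (projop ` S) \<and> semialgebraic_ops (projop ` S)"

definition admissible_order_ideal ::
  "('a::euclidean_space \<Rightarrow> 'a \<Rightarrow> 'a) \<Rightarrow> ('a \<Rightarrow>\<^sub>L 'a) set \<Rightarrow> 'a set \<Rightarrow> 'a set set \<Rightarrow> bool" where
  "admissible_order_ideal br Aut h I \<longleftrightarrow>
     I \<subseteq> Pset br Aut h \<and>
     (\<forall>k\<in>I. \<forall>k'\<in>Pset br Aut h. k' \<subseteq> k \<longrightarrow> k' \<in> I) \<and>
     UNIV \<notin> I \<and>
     compact_semialgebraic_family I \<and>
     compact_semialgebraic_family (Pset br Aut h - I)"

definition flags :: "'a set set \<Rightarrow> 'a set list set" where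
  "flags S = {fs. fs \<noteq> [] \<and> sorted_wrt (\<lambda>a b. b \<subset> a) fs \<and> set fs \<subseteq> S}"

definition chihull :: "'a::euclidean_space set list \<Rightarrow> ('a \<Rightarrow>\<^sub>L 'a) set" where
  "chihull fs = convex hull (chibar ` set fs)"

definition butterfly ::
  "('a::euclidean_space set \<Rightarrow> ('a \<Rightarrow>\<^sub>L 'a) set) \<Rightarrow> 'a set list \<Rightarrow> ('a \<Rightarrow>\<^sub>L 'a) set" where
  "butterfly B fs =
     (if length fs = 1 then B (hd fs)
      else if hd fs = UNIV then chihull (tl fs)
      else (\<Union>P1\<in>B (hd fs). \<Union>P2\<in>chihull (tl fs). closed_segment P1 P2))"

definition IIset :: "'a set set \<Rightarrow> 'a set set \<Rightarrow> 'a set list set" where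
  "IIset P I = {fs. fs \<in> flags P \<and> fs \<notin> flags I \<and> set (tl fs) \<subseteq> I}"

(* kappa_rel B P I A t : A \<in> B[II] and kappa(A) = t, computed from some flag in II
   containing A (the paper shows the value does not depend on the flag) *)
definition kappa_rel ::
  "('a::euclidean_space set \<Rightarrow> ('a \<Rightarrow>\<^sub>L 'a) set) \<Rightarrow> 'a set set \<Rightarrow> 'a set set \<Rightarrow> ('a \<Rightarrow>\<^sub>L 'a) \<Rightarrow> real \<Rightarrow> bool" where
  "kappa_rel B P I A t \<longleftrightarrow>
     (\<exists>fs\<in>IIset P I. A \<in> butterfly B fs \<and>
        (if hd fs = UNIV then t = 0
         else if length fs = 1 then t = 1
         else (\<exists>A1\<in>chihull (tl fs). \<exists>A2\<in>B (hd fs). A = (1 - t) *\<^sub>R A1 + t *\<^sub>R A2)))"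

end

theory Submission
  imports Defs
begin


lemma proj_char:
  fixes k :: "'a::euclidean_space set"
  assumes "subspace k" "y \<in> k" "\<And>z. z \<in> k \<Longrightarrow> inner (x - y) z = 0"
  shows "closest_point k x = y"
proof -
  have "\<forall>z\<in>k. dist x y \<le> dist x z"
  proof
    fix z assume z: "z \<in> k"
    have "y - z \<in> k" using assms z by (simp add: subspace_diff)
    hence o: "inner (x - y) (y - z) = 0" using assms(3) by blast
    have "(dist x z)^2 = (dist x y)^2 + (norm (y - z))^2"
    proof -
      have "x - z = (x - y) + (y - z)" by simp
      hence "(norm (x - z))^2 = (norm (x-y))^2 + (norm (y-z))^2"
        by (metis norm_add_Pythagorean o orthogonal_def)
      thus ?thesis by (simp add: dist_norm)
    qed
    thus "dist x y \<le> dist x z"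
      by (smt (verit) power2_le_imp_le zero_le_dist zero_le_power2)
  qed
  thus ?thesis
    using closest_point_unique[of k y x] assms subspace_imp_convex closed_subspace by metis
qed

lemma proj_exists:
  fixes k :: "'a::euclidean_space set"
  assumes "subspace k"
  shows "closest_point k x \<in> k \<and> (\<forall>z\<in>k. inner (x - closest_point k x) z = 0)"
proof -
  obtain y z where "y \<in> span k" "\<And>w. w \<in> span k \<Longrightarrow> orthogonal z w" "x = y + z"
    using orthogonal_subspace_decomp_exists by blast
  moreover have sk: "span k = k" using assms by (simp add: span_eq_iff)
  ultimately have "y \<in> k" "\<And>w. w \<in> k \<Longrightarrow> inner (x - y) w = 0"
    by (auto simp: orthogonal_def inner_commute)
  thus ?thesis using proj_char[OF assms] by simp
qed

lemma cp_linear: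
  fixes k :: "'a::euclidean_space set"
  assumes "subspace k"
  shows "linear (closest_point k)"
proof (rule linearI)
  fix x y :: 'a and c :: real
  show "closest_point k (x + y) = closest_point k x + closest_point k y"
    using proj_exists[OF assms, of x] proj_exists[OF assms, of y]
    by (intro proj_char[OF assms]) (auto simp: subspace_add assms inner_diff_left inner_add_left)
  show "closest_point k (c *\<^sub>R x) = c *\<^sub>R closest_point k x"
    using proj_exists[OF assms, of x]
    by (intro proj_char[OF assms]) (auto simp: subspace_scale assms inner_diff_left
         simp flip: scaleR_diff_right)
qed

lemma projop_apply:
  fixes k :: "'a::euclidean_space set"
  assumes "subspace k"
  shows "blinfun_apply (projop k) = closest_point k"
  unfolding projop_def
  by (rule bounded_linear_Blinfun_apply[OF linear_conv_bounded_linear[THEN iffD1, OF cp_linear[OF assms]]])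

lemma P_in: "subspace k \<Longrightarrow> projop k x \<in> k"
  using proj_exists projop_apply by metis

lemma P_orth: "subspace k \<Longrightarrow> z \<in> k \<Longrightarrow> inner (x - projop k x) z = 0"
  using proj_exists projop_apply by metis

lemma P_char: "subspace k \<Longrightarrow> y \<in> k \<Longrightarrow> (\<And>z. z \<in> k \<Longrightarrow> inner (x - y) z = 0) \<Longrightarrow> projop k x = y"
  using proj_char projop_apply by metis

lemma P_id: "subspace k \<Longrightarrow> x \<in> k \<Longrightarrow> projop k x = x"
  by (rule P_char) auto

lemma P_zero: "subspace k \<Longrightarrow> (\<And>z. z \<in> k \<Longrightarrow> inner x z = 0) \<Longrightarrow> projop k x = 0"
  by (rule P_char) (auto simp: subspace_0)

lemma P_sym: "subspace k \<Longrightarrow> inner (projop k x) y = inner x (projop k y)"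
proof -
  assume k: "subspace k"
  have 1: "inner (x - projop k x) (projop k y) = 0" using k P_in P_orth by blast
  have 2: "inner (y - projop k y) (projop k x) = 0" using k P_in P_orth by blast
  from 1 2 have "inner x (projop k y) = inner (projop k x) (projop k y)"
     "inner y (projop k x) = inner (projop k y) (projop k x)"
    by (simp_all add: inner_diff_left)
  thus ?thesis by (simp add: inner_commute)
qed

lemma P_idem: "subspace k \<Longrightarrow> projop k (projop k x) = projop k x"
  using P_id P_in by blast

lemma P_sub: "subspace j \<Longrightarrow> subspace k \<Longrightarrow> j \<subseteq> k \<Longrightarrow> projop j (projop k x) = projop j x"
proof -
  assume j: "subspace j" and k: "subspace k" and jk: "j \<subseteq> k"
  show ?thesis
  proof (rule P_char[OF j])
    show "projop j x \<in> j" using j P_in by blast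
    fix z assume z: "z \<in> j"
    have "inner (projop k x - projop j x) z = inner (x - projop j x) z - inner (x - projop k x) z"
      by (simp add: inner_diff_left)
    also have "\<dots> = 0" using P_orth[OF j z] P_orth[OF k, of z x] z jk by auto
    finally show "inner (projop k x - projop j x) z = 0" .
  qed
qed

lemma P_sub2: "subspace j \<Longrightarrow> subspace k \<Longrightarrow> j \<subseteq> k \<Longrightarrow> projop k (projop j x) = projop j x"
  using P_id P_in by blast



lemma trace_add: "trace_op (X + Y) = trace_op X + trace_op Y"
  by (simp add: trace_op_def blinfun.add_left inner_add_left sum.distrib)
lemma trace_diff: "trace_op (X - Y) = trace_op X - trace_op Y"
  by (simp add: trace_op_def blinfun.diff_left inner_diff_left sum_subtractf)
lemma trace_scale: "trace_op (c *\<^sub>R X) = c * trace_op X"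
  by (simp add: trace_op_def blinfun.scaleR_left sum_distrib_left)
lemma trace_zero: "trace_op (0::'a::euclidean_space \<Rightarrow>\<^sub>L 'a) = 0"
  by (simp add: trace_op_def)
lemma trace_sum: "trace_op (\<Sum>i\<in>S. f i) = (\<Sum>i\<in>S. trace_op (f i))"
  by (induction S rule: infinite_finite_induct) (auto simp: trace_zero trace_add)
lemma trace_id: "trace_op (id_blinfun::'a::euclidean_space \<Rightarrow>\<^sub>L 'a) = real DIM('a)"
  by (simp add: trace_op_def)

lemma proj_onb:
  fixes k :: "'a::euclidean_space set"
  assumes k: "subspace k" and Bk: "Bs \<subseteq> k" and po: "pairwise orthogonal Bs"
    and n1: "\<And>x. x \<in> Bs \<Longrightarrow> norm x = 1" and sp: "span Bs = k" and fin: "finite Bs"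
  shows "projop k x = (\<Sum>e\<in>Bs. inner x e *\<^sub>R e)"
proof (rule P_char[OF k])
  show "(\<Sum>e\<in>Bs. inner x e *\<^sub>R e) \<in> k"
    using Bk k by (auto intro!: subspace_sum subspace_scale)
  have B: "inner (x - (\<Sum>e\<in>Bs. inner x e *\<^sub>R e)) e' = 0" if e': "e' \<in> Bs" for e'
  proof -
    have s1: "(\<Sum>e\<in>Bs. inner x e * inner e e') = inner x e' * inner e' e' + (\<Sum>e\<in>Bs - {e'}. inner x e * inner e e')"
      by (rule sum.remove[OF fin e'])
    have s2: "(\<Sum>e\<in>Bs - {e'}. inner x e * inner e e') = 0"
      using po e' by (intro sum.neutral) (auto simp: pairwise_def orthogonal_def)
    have s3: "inner e' e' = 1" using n1[OF e'] norm_eq_1 by blast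
    have "(\<Sum>e\<in>Bs. inner x e * inner e e') = inner x e'" using s1 s2 s3 by simp
    thus ?thesis by (simp add: inner_diff_left inner_sum_left)
  qed
  fix z assume "z \<in> k"
  hence "z \<in> span Bs" using sp by simp
  thus "inner (x - (\<Sum>e\<in>Bs. inner x e *\<^sub>R e)) z = 0"
    using orthogonal_to_span[of z Bs] B by (auto simp: orthogonal_def)
qed

lemma trace_proj:
  fixes k :: "'a::euclidean_space set"
  assumes k: "subspace k"
  shows "trace_op (projop k) = real (dim k)"
proof -
  obtain Bs where Bk: "Bs \<subseteq> k" and po: "pairwise orthogonal Bs"
    and n1: "\<And>x. x \<in> Bs \<Longrightarrow> norm x = 1" and ind: "independent Bs" and c: "card Bs = dim k"
    and sp: "span Bs = k"
    using orthonormal_basis_subspace[OF k] by blast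
  have fin: "finite Bs" using ind independent_imp_finite by blast
  have pe: "\<And>x. projop k x = (\<Sum>e\<in>Bs. inner x e *\<^sub>R e)"
    using proj_onb[OF k Bk po n1 sp fin] by blast
  have "trace_op (projop k) = (\<Sum>b\<in>Basis. inner (\<Sum>e\<in>Bs. inner b e *\<^sub>R e) b)"
    unfolding trace_op_def pe by (rule refl)
  also have "\<dots> = (\<Sum>b\<in>Basis. \<Sum>e\<in>Bs. inner b e * inner e b)"
    by (simp only: inner_sum_left inner_scaleR_left)
  also have "\<dots> = (\<Sum>e\<in>Bs. \<Sum>b\<in>Basis. inner b e * inner e b)"
    by (rule sum.swap)
  also have "\<dots> = (\<Sum>e\<in>Bs. \<Sum>b\<in>Basis. inner e b * inner e b)"
  proof -
    have ic: "\<And>b e. inner b e * inner e b = inner e b * inner e b" by (simp add: inner_commute)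
    show ?thesis by (simp only: ic)
  qed
  also have "\<dots> = (\<Sum>e\<in>Bs. inner e e)"
  proof -
    have ei: "\<And>e. (\<Sum>b\<in>Basis. inner e b * inner e b) = inner e e" by (rule euclidean_inner[symmetric])
    show ?thesis by (simp only: ei)
  qed
  also have "\<dots> = (\<Sum>e\<in>Bs. 1)"
    using n1 norm_eq_1 by (intro sum.cong) auto
  also have "\<dots> = real (card Bs)" by simp
  finally show ?thesis using c by (simp only:)
qed



lemma dim_lt:
  fixes k :: "'a::euclidean_space set"
  assumes "subspace k" "k \<noteq> UNIV"
  shows "dim k < DIM('a)"
proof -
  have "dim k \<le> DIM('a)" using dim_subset_UNIV[of k] by simp
  moreover have sk: "span k = k" using assms(1) by (simp add: span_eq_iff)
  have "dim k \<noteq> DIM('a)" using dim_eq_full[of k] assms(2) sk by auto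
  ultimately show ?thesis by simp
qed

lemma chibar_apply:
  "chibar k x = (1 / real (DIM('a) - dim k)) *\<^sub>R (x - projop k x)" for k :: "'a::euclidean_space set"
  by (simp add: chibar_def blinfun.scaleR_left blinfun.diff_left)

lemma chi_pos:
  fixes k :: "'a::euclidean_space set"
  assumes "subspace k" "k \<noteq> UNIV"
  shows "0 < 1 / real (DIM('a) - dim k)"
  using dim_lt[OF assms] by simp

lemma chibar_sym: "subspace k \<Longrightarrow> symmetric_op (chibar k)"
  unfolding symmetric_op_def chibar_apply
  by (simp add: inner_diff_left inner_diff_right P_sym)

lemma chibar_trace:
  fixes k :: "'a::euclidean_space set"
  assumes "subspace k" "k \<noteq> UNIV"
  shows "trace_op (chibar k) = 1"
proof -
  have "trace_op (chibar k) = (1 / real (DIM('a) - dim k)) * (real DIM('a) - real (dim k))"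
    unfolding chibar_def by (simp add: trace_scale trace_diff trace_id trace_proj assms)
  also have "real DIM('a) - real (dim k) = real (DIM('a) - dim k)"
    using dim_lt[OF assms] by simp
  finally show ?thesis using dim_lt[OF assms] by simp
qed

lemma psd_nonneg_spec: "(\<And>x. 0 \<le> inner (X x) x) \<Longrightarrow> nonneg_spectrum X" for X :: "'a::euclidean_space \<Rightarrow>\<^sub>L 'a"
  unfolding nonneg_spectrum_def
proof (intro allI impI)
  fix c x assume h: "\<And>x. 0 \<le> inner (X x) x" and x: "x \<noteq> 0" and e: "X x = c *\<^sub>R x"
  have "0 \<le> c * inner x x" using h[of x] e by simp
  moreover have "0 < inner x x" using x by simp
  ultimately show "0 \<le> c" by (simp add: zero_le_mult_iff)
qed

lemma chibar_psd:
  fixes k :: "'a::euclidean_space set"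
  assumes "subspace k" "k \<noteq> UNIV"
  shows "0 \<le> inner (chibar k x) x"
proof -
  have "inner (x - projop k x) (projop k x) = 0" using P_orth P_in assms by blast
  hence "inner (x - projop k x) x = inner (x - projop k x) (x - projop k x)"
    by (simp add: inner_diff_right)
  thus ?thesis unfolding chibar_apply using chi_pos[OF assms] by simp
qed

lemma aut_preserve:
  assumes aut: "automorphism_group br h Aut" and s: "\<sigma> \<in> Aut"
    and inv: "\<forall>\<sigma>\<in>Aut. blinfun_apply \<sigma> ` k \<subseteq> k" and k: "subspace k"
  shows "\<sigma> (projop k x) = projop k (\<sigma> x)"
proof -
  have A3: "\<forall>\<sigma>\<in>Aut. \<exists>\<tau>\<in>Aut. \<sigma> o\<^sub>L \<tau> = id_blinfun \<and> \<tau> o\<^sub>L \<sigma> = id_blinfun"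
    using aut unfolding automorphism_group_def by (elim conjE) assumption
  have A5: "\<forall>\<sigma>\<in>Aut. \<forall>x y. inner (\<sigma> x) (\<sigma> y) = inner x y"
    using aut unfolding automorphism_group_def by (elim conjE) assumption
  obtain \<tau> where t: "\<tau> \<in> Aut" "\<sigma> o\<^sub>L \<tau> = id_blinfun"
    using A3 s by blast
  have st: "\<sigma> (\<tau> z) = z" for z
  proof -
    have "(\<sigma> o\<^sub>L \<tau>) z = id_blinfun z" by (simp only: t(2))
    thus ?thesis by simp
  qed
  have ip: "inner (\<sigma> u) (\<sigma> v) = inner u v" for u v using A5 s by blast
  show ?thesis
  proof (rule sym, rule P_char[OF k])
    show "\<sigma> (projop k x) \<in> k" using inv s P_in[OF k] by blast
    fix z assume z: "z \<in> k"
    have tz: "\<tau> z \<in> k" using inv t z by blast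
    have "inner (\<sigma> x - \<sigma> (projop k x)) z = inner (\<sigma> (x - projop k x)) (\<sigma> (\<tau> z))"
      by (simp add: st blinfun.diff_right)
    also have "\<dots> = inner (x - projop k x) (\<tau> z)" by (rule ip)
    also have "\<dots> = 0" using P_orth[OF k tz] .
    finally show "inner (\<sigma> x - \<sigma> (projop k x)) z = 0" .
  qed
qed

lemma br_antisym:
  assumes "lie_algebra_with_invariant_Q br"
  shows "br y x = - br x y"
proof -
  have b: "bilinear br" and z: "\<And>x. br x x = 0" using assms unfolding lie_algebra_with_invariant_Q_def by auto
  have "0 = br (x + y) (x + y)" using z by simp
  also have "\<dots> = br x x + br x y + (br y x + br y y)"
    by (simp add: bilinear_ladd[OF b] bilinear_radd[OF b])
  finally show ?thesis using z by (simp add: eq_neg_iff_add_eq_0 add.commute)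
qed

lemma br_inner_skew:
  assumes "lie_algebra_with_invariant_Q br"
  shows "inner (br X w) z = - inner w (br X z)"
proof -
  have inv: "\<And>x y z. inner (br x y) z = inner x (br y z)"
    using assms unfolding lie_algebra_with_invariant_Q_def by auto
  have "inner (br X w) z = - inner (br w X) z" using br_antisym[OF assms, of X w] by simp
  also have "\<dots> = - inner w (br X z)" using inv by simp
  finally show ?thesis .
qed

lemma ad_P:
  assumes lie: "lie_algebra_with_invariant_Q br" and k: "subalgebra br k" and X: "X \<in> k"
  shows "projop k (br X Y) = br X (projop k Y)"
proof -
  have sk: "subspace k" using k unfolding subalgebra_def by auto
  have b: "bilinear br" using lie unfolding lie_algebra_with_invariant_Q_def by auto
  show ?thesis
  proof (rule P_char[OF sk])
    show "br X (projop k Y) \<in> k" using k X P_in[OF sk] unfolding subalgebra_def by auto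
    fix z assume z: "z \<in> k"
    have "br X z \<in> k" using k X z unfolding subalgebra_def by auto
    hence "inner (Y - projop k Y) (br X z) = 0" using P_orth[OF sk] by blast
    thus "inner (br X Y - br X (projop k Y)) z = 0"
      using br_inner_skew[OF lie, of X "Y - projop k Y" z] by (simp add: bilinear_rsub[OF b])
  qed
qed

lemma chibar_D:
  assumes lie: "lie_algebra_with_invariant_Q br" and aut: "automorphism_group br h Aut"
    and kP: "k \<in> Pset br Aut h" and kU: "k \<noteq> UNIV" and jk: "j \<subseteq> k" and jU: "j \<noteq> UNIV"
  shows "chibar k \<in> Dset br Aut j"
proof -
  have ka: "subalgebra br k" and inv: "\<forall>\<sigma>\<in>Aut. blinfun_apply \<sigma> ` k \<subseteq> k"
    using kP unfolding Pset_def by auto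
  have sk: "subspace k" using ka unfolding subalgebra_def by auto
  have b: "bilinear br" using lie unfolding lie_algebra_with_invariant_Q_def by auto
  have "\<forall>\<sigma>\<in>Aut. chibar k o\<^sub>L \<sigma> = \<sigma> o\<^sub>L chibar k"
  proof (intro ballI blinfun_eqI)
    fix \<sigma> x assume s: "\<sigma> \<in> Aut"
    show "(chibar k o\<^sub>L \<sigma>) x = (\<sigma> o\<^sub>L chibar k) x"
      using aut_preserve[OF aut s inv sk, of x]
      by (simp add: chibar_apply blinfun.scaleR_right blinfun.diff_right)
  qed
  moreover have "\<forall>x\<in>j. chibar k x = 0" using jk P_id[OF sk] by (auto simp: chibar_apply)
  moreover have "\<forall>X\<in>j. \<forall>Y. chibar k (br X Y) = br X (chibar k Y)"
    using jk ad_P[OF lie ka] by (auto simp: chibar_apply bilinear_rmul[OF b] bilinear_rsub[OF b])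
  moreover have "nonneg_spectrum (chibar k)"
    by (rule psd_nonneg_spec) (rule chibar_psd[OF sk kU])
  ultimately show ?thesis
    unfolding Dset_def using chibar_sym[OF sk] chibar_trace[OF sk kU] jU by simp
qed



lemma lagrange_eig:
  fixes X :: "'a::euclidean_space \<Rightarrow>\<^sub>L 'a"
  assumes sym: "symmetric_op X" and W: "subspace W" and inv: "\<And>v. v \<in> W \<Longrightarrow> X v \<in> W"
    and w: "w \<in> W" "inner w w = 1"
    and mx: "\<And>v. v \<in> W \<Longrightarrow> inner (X v) v \<le> inner (X w) w * inner v v"
  shows "X w = inner (X w) w *\<^sub>R w"
proof -
  define M where "M = inner (X w) w"
  have S: "\<And>u v. inner (X u) v = inner u (X v)" using sym unfolding symmetric_op_def by blast
  have key: "inner (X w) h = 0" if h: "h \<in> W" "inner h w = 0" for h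
  proof -
    define a where "a = inner (X w) h"
    define b where "b = inner (X h) h - M * inner h h"
    have ineq: "2 * s * a + s^2 * b \<le> 0" for s
    proof -
      have "w + s *\<^sub>R h \<in> W" using W w h by (simp add: subspace_add subspace_scale)
      from mx[OF this] have "inner (X (w + s *\<^sub>R h)) (w + s *\<^sub>R h) \<le> M * inner (w + s *\<^sub>R h) (w + s *\<^sub>R h)"
        unfolding M_def .
      moreover have "inner (X (w + s *\<^sub>R h)) (w + s *\<^sub>R h) = M + 2 * s * a + s^2 * inner (X h) h"
      proof -
        have "inner (X h) w = inner h (X w)" using S by blast
        hence "inner (X h) w = a" unfolding a_def by (simp add: inner_commute)
        thus ?thesis unfolding M_def a_def
          by (simp add: blinfun.add_right blinfun.scaleR_right inner_add_left inner_add_right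
              power2_eq_square algebra_simps)
      qed
      moreover have "inner (w + s *\<^sub>R h) (w + s *\<^sub>R h) = 1 + s^2 * inner h h"
        using w h by (simp add: inner_add_left inner_add_right inner_commute power2_eq_square)
      ultimately have "M + 2 * s * a + s^2 * inner (X h) h \<le> M * (1 + s^2 * inner h h)"
        by (simp only:)
      thus ?thesis unfolding b_def by (simp add: algebra_simps)
    qed
    define d where "d = \<bar>b\<bar> + 1"
    define s where "s = a / d"
    have pos: "d > 0" unfolding d_def by simp
    have qp: "2 * d + b > 0" unfolding d_def by (simp add: abs_if)
    have "2 * s * a + s^2 * b = a^2 * (2 * d + b) / d^2"
      unfolding s_def using pos by (simp add: field_simps power2_eq_square)
    hence q: "a^2 * (2 * d + b) / d^2 \<le> 0" using ineq[of s] by simp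
    have dp: "d^2 > 0" using pos by simp
    have "a^2 * (2 * d + b) \<le> 0" using q dp by (simp add: divide_le_0_iff)
    moreover have "a^2 * (2 * d + b) \<ge> 0" using qp by simp
    ultimately have "a^2 * (2 * d + b) = 0" by linarith
    hence "a^2 \<le> 0" using qp by simp
    thus ?thesis unfolding a_def by simp
  qed
  define h where "h = X w - M *\<^sub>R w"
  have hW: "h \<in> W" unfolding h_def using inv w W by (simp add: subspace_diff subspace_scale)
  have hw: "inner h w = 0" unfolding h_def M_def using w by (simp add: inner_diff_left)
  have "inner h h = inner (X w) h - M * inner w h" unfolding h_def by (simp add: inner_diff_left)
  also have "\<dots> = 0" using key[OF hW hw] hw by (simp add: inner_commute)
  finally have "h = 0" by simp
  thus ?thesis unfolding h_def M_def by simp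
qed

lemma exists_max:
  fixes X :: "'a::euclidean_space \<Rightarrow>\<^sub>L 'a"
  assumes W: "subspace W" and ne: "W \<noteq> {0}"
  obtains w where "w \<in> W" "inner w w = 1" "\<And>v. v \<in> W \<Longrightarrow> inner (X v) v \<le> inner (X w) w * inner v v"
proof -
  define S where "S = W \<inter> sphere 0 1"
  have cS: "compact S" unfolding S_def using closed_subspace[OF W]
    by (simp add: closed_Int_compact)
  obtain v0 where "v0 \<in> W" "v0 \<noteq> 0" using ne W subspace_0 by blast
  hence "v0 /\<^sub>R norm v0 \<in> S" unfolding S_def using W by (simp add: subspace_scale)
  hence neS: "S \<noteq> {}" by blast
  have cont: "continuous_on S (\<lambda>v. inner (X v) v)"
    by (intro continuous_intros)
  obtain w where wS: "w \<in> S" and wmax: "\<And>v. v \<in> S \<Longrightarrow> inner (X v) v \<le> inner (X w) w"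
    using compact_attains_sup[OF compact_continuous_image[OF cont cS]] neS by auto
  have wW: "w \<in> W" and w1: "inner w w = 1" using wS unfolding S_def by (auto simp: norm_eq_1)
  show ?thesis
  proof (rule that[OF wW w1])
    fix v assume vW: "v \<in> W"
    show "inner (X v) v \<le> inner (X w) w * inner v v"
    proof (cases "v = 0")
      case True thus ?thesis by simp
    next
      case False
      define u where "u = v /\<^sub>R norm v"
      have "u \<in> S" unfolding S_def u_def using vW W False by (simp add: subspace_scale)
      hence "inner (X u) u \<le> inner (X w) w" by (rule wmax)
      moreover have "inner (X u) u = inner (X v) v / (norm v)^2"
        unfolding u_def by (simp add: blinfun.scaleR_right power2_eq_square field_simps)
      moreover have "inner v v = (norm v)^2" by (simp add: power2_norm_eq_inner)
      moreover have "(norm v)^2 > 0" using False by simp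
      ultimately show ?thesis by (simp add: divide_le_eq mult.commute)
    qed
  qed
qed

lemma exists_eigvec:
  fixes X :: "'a::euclidean_space \<Rightarrow>\<^sub>L 'a"
  assumes sym: "symmetric_op X" and W: "subspace W" and inv: "\<And>v. v \<in> W \<Longrightarrow> X v \<in> W"
    and ne: "W \<noteq> {0}"
  obtains w c where "w \<in> W" "inner w w = 1" "X w = c *\<^sub>R w"
proof -
  obtain w where w: "w \<in> W" "inner w w = 1" and mx: "\<And>v. v \<in> W \<Longrightarrow> inner (X v) v \<le> inner (X w) w * inner v v"
    using exists_max[OF W ne, of X] by blast
  show ?thesis using that[OF w lagrange_eig[OF sym W inv w mx]] .
qed

lemma psd_of_nonneg:
  fixes X :: "'a::euclidean_space \<Rightarrow>\<^sub>L 'a"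
  assumes sym: "symmetric_op X" and nn: "nonneg_spectrum X"
  shows "0 \<le> inner (X x) x"
proof -
  have s2: "symmetric_op (- X)" using sym unfolding symmetric_op_def by (simp add: blinfun.minus_left)
  have ne: "(UNIV::'a set) \<noteq> {0}"
  proof -
    obtain b :: 'a where "b \<in> Basis" using nonempty_Basis by blast
    hence "b \<noteq> 0" by (rule nonzero_Basis)
    thus ?thesis by (metis UNIV_I singletonD)
  qed
  obtain w where w0: "w \<in> (UNIV::'a set)" and w: "inner w w = 1"
    and mx0: "\<And>v. v \<in> UNIV \<Longrightarrow> inner ((- X) v) v \<le> inner ((- X) w) w * inner v v"
    using exists_max[OF subspace_UNIV ne, of "- X"] by blast
  have mx: "\<And>v. inner ((- X) v) v \<le> inner ((- X) w) w * inner v v" using mx0 by blast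
  have e: "(- X) w = inner ((- X) w) w *\<^sub>R w"
    using lagrange_eig[OF s2 subspace_UNIV _ _ w mx] by simp
  have "w \<noteq> 0" using w by auto
  moreover have "X w = (- inner ((- X) w) w) *\<^sub>R w" using e by (simp add: blinfun.minus_left)
  ultimately have "0 \<le> - inner ((- X) w) w" using nn unfolding nonneg_spectrum_def by blast
  moreover have "- inner (X x) x \<le> inner ((- X) w) w * inner x x"
    using mx[of x] by (simp add: blinfun.minus_left)
  moreover have "0 \<le> inner x x" by simp
  ultimately have "inner ((- X) w) w * inner x x \<le> 0" by (simp add: mult_nonpos_nonneg)
  with \<open>- inner (X x) x \<le> inner ((- X) w) w * inner x x\<close> show ?thesis by linarith
qed



definition eigs :: "('a::euclidean_space \<Rightarrow>\<^sub>L 'a) \<Rightarrow> 'a set \<Rightarrow> 'a set" where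
  "eigs X W = {x. x \<in> W \<and> (\<exists>c. X x = c *\<^sub>R x)}"

lemma spectral:
  fixes X :: "'a::euclidean_space \<Rightarrow>\<^sub>L 'a"
  assumes sym: "symmetric_op X"
  shows "subspace W \<Longrightarrow> (\<And>v. v \<in> W \<Longrightarrow> X v \<in> W) \<Longrightarrow> W \<subseteq> span (eigs X W)"
proof (induction "dim W" arbitrary: W rule: less_induct)
  case less
  show ?case
  proof (cases "W = {0}")
    case True thus ?thesis by (simp add: span_0)
  next
    case False
    obtain w c where w: "w \<in> W" "inner w w = 1" "X w = c *\<^sub>R w"
      using exists_eigvec[OF sym less.prems False] by blast
    define W' where "W' = {v. v \<in> W \<and> inner v w = 0}"
    have sW': "subspace W'" unfolding subspace_def
    proof (intro conjI ballI allI)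
      show "0 \<in> W'" unfolding W'_def using less.prems(1) subspace_0 by simp
      fix x y assume "x \<in> W'" "y \<in> W'"
      thus "x + y \<in> W'" unfolding W'_def using less.prems(1) subspace_add[of W x y]
        by (simp add: inner_add_left)
    next
      fix c x assume "x \<in> W'"
      thus "c *\<^sub>R x \<in> W'" unfolding W'_def using less.prems(1) subspace_scale[of W x c]
        by simp
    qed
    have S: "\<And>u v. inner (X u) v = inner u (X v)" using sym unfolding symmetric_op_def by blast
    have iW': "X v \<in> W'" if "v \<in> W'" for v
    proof -
      have "inner (X v) w = inner v (X w)" by (rule S)
      also have "\<dots> = c * inner v w" using w by simp
      finally show ?thesis using that less.prems(2) unfolding W'_def by auto
    qed
    have "W' \<subseteq> W" unfolding W'_def by auto
    moreover have "w \<notin> W'" using w unfolding W'_def by auto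
    ultimately have "W' \<subset> W" using w(1) by blast
    have e1: "span W' = W'" using sW' span_eq_iff by blast
    have e2: "span W = W" using less.prems(1) span_eq_iff by blast
    have "dim W' < dim W" using dim_psubset[of W' W] \<open>W' \<subset> W\<close> unfolding e1 e2 by blast
    from less.hyps[OF this sW' iW'] have IH: "W' \<subseteq> span (eigs X W')" .
    have "eigs X W' \<subseteq> eigs X W" unfolding eigs_def W'_def by auto
    hence IH2: "W' \<subseteq> span (eigs X W)" using IH span_mono by blast
    have wE: "w \<in> eigs X W" using w unfolding eigs_def by auto
    show ?thesis
    proof
      fix v assume v: "v \<in> W"
      define v' where "v' = v - inner v w *\<^sub>R w"
      have "v - inner v w *\<^sub>R w \<in> W" using v w less.prems(1) subspace_diff subspace_scale by blast
      moreover have "inner (v - inner v w *\<^sub>R w) w = 0" using w by (simp add: inner_diff_left)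
      ultimately have "v' \<in> W'" unfolding W'_def v'_def by simp
      hence "v' \<in> span (eigs X W)" using IH2 by blast
      moreover have "inner v w *\<^sub>R w \<in> span (eigs X W)" using span_base[OF wE] by (rule span_mul)
      ultimately have "v' + inner v w *\<^sub>R w \<in> span (eigs X W)" by (rule span_add)
      thus "v \<in> span (eigs X W)" unfolding v'_def by simp
    qed
  qed
qed

lemma eig_orth:
  fixes X :: "'a::euclidean_space \<Rightarrow>\<^sub>L 'a"
  assumes sym: "symmetric_op X" and "X u = a *\<^sub>R u" "X v = b *\<^sub>R v" "a \<noteq> b"
  shows "inner u v = 0"
proof -
  have "inner (X u) v = inner u (X v)" using sym unfolding symmetric_op_def by blast
  hence "a * inner u v = b * inner u v" using assms by simp
  thus ?thesis using assms(4) by simp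
qed

lemma inner_zero_span:
  fixes z :: "'a::euclidean_space"
  assumes "x \<in> span S" "\<And>y. y \<in> S \<Longrightarrow> inner z y = 0"
  shows "inner z x = 0"
  using orthogonal_to_span[of x S z] assms by (auto simp: orthogonal_def)

lemma Fsub_subspace: "subspace (Fsub X a)"
  unfolding Fsub_def by (rule subspace_span)

lemma Fsub_mono: "a \<le> b \<Longrightarrow> Fsub X a \<subseteq> Fsub X b"
  unfolding Fsub_def by (rule span_mono) auto

lemma Fsub_eig: "X x = c *\<^sub>R x \<Longrightarrow> c \<le> a \<Longrightarrow> x \<in> Fsub X a" for X :: "'a::euclidean_space \<Rightarrow>\<^sub>L 'a"
  unfolding Fsub_def by (cases "x = 0") (auto simp: span_0 intro!: span_base)

lemma Fsub_char:
  fixes X :: "'a::euclidean_space \<Rightarrow>\<^sub>L 'a"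
  assumes sym: "symmetric_op X"
  shows "z \<in> Fsub X p \<longleftrightarrow> (\<forall>w c. X w = c *\<^sub>R w \<and> p < c \<longrightarrow> inner z w = 0)"
proof
  assume z: "z \<in> Fsub X p"
  show "\<forall>w c. X w = c *\<^sub>R w \<and> p < c \<longrightarrow> inner z w = 0"
  proof (intro allI impI)
    fix w c assume wc: "X w = c *\<^sub>R w \<and> p < c"
    have "inner w z = 0"
      using z unfolding Fsub_def
    proof (rule inner_zero_span)
      fix y assume "y \<in> {x. x \<noteq> 0 \<and> (\<exists>c\<le>p. X x = c *\<^sub>R x)}"
      then obtain c' where "c' \<le> p" "X y = c' *\<^sub>R y" by auto
      thus "inner w y = 0" using eig_orth[OF sym, of w c y c'] wc by auto
    qed
    thus "inner z w = 0" by (simp add: inner_commute)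
  qed
next
  assume H: "\<forall>w c. X w = c *\<^sub>R w \<and> p < c \<longrightarrow> inner z w = 0"
  define E1 where "E1 = {x. \<exists>c\<le>p. X x = c *\<^sub>R x}"
  define E2 where "E2 = {x. \<exists>c>p. X x = c *\<^sub>R x}"
  have "eigs X UNIV \<subseteq> E1 \<union> E2"
  proof
    fix x assume "x \<in> eigs X UNIV"
    then obtain c where c: "X x = c *\<^sub>R x" unfolding eigs_def by auto
    show "x \<in> E1 \<union> E2"
    proof (cases "c \<le> p")
      case True thus ?thesis using c unfolding E1_def by auto
    next
      case False hence "c > p" by simp
      thus ?thesis using c unfolding E2_def by auto
    qed
  qed
  hence sub: "span (eigs X UNIV) \<subseteq> span (E1 \<union> E2)" by (rule span_mono)
  have "(UNIV::'a set) \<subseteq> span (eigs X UNIV)" by (rule spectral[OF sym subspace_UNIV]) simp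
  hence "z \<in> span (E1 \<union> E2)" using sub by blast
  then obtain z1 z2 where z12: "z1 \<in> span E1" "z2 \<in> span E2" "z = z1 + z2"
    unfolding span_Un by blast
  have E1F: "span E1 \<subseteq> Fsub X p"
    using Fsub_subspace[of X p] unfolding E1_def by (intro span_minimal) (auto intro: Fsub_eig)
  have o1: "inner z z2 = 0"
    using z12(2) by (rule inner_zero_span) (use H E2_def in auto)
  have o2: "inner y z2 = 0" if y1: "y \<in> E1" for y
    using z12(2)
  proof (rule inner_zero_span)
    fix x assume "x \<in> E2"
    then obtain c where "c > p" "X x = c *\<^sub>R x" unfolding E2_def by auto
    moreover obtain c' where "c' \<le> p" "X y = c' *\<^sub>R y" using y1 unfolding E1_def by auto
    ultimately show "inner y x = 0" using eig_orth[OF sym, of y c' x c] by auto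
  qed
  have o3: "inner z2 z1 = 0"
    using z12(1) by (rule inner_zero_span) (use o2 in \<open>auto simp: inner_commute\<close>)
  have "inner z2 z2 = inner z z2 - inner z1 z2" using z12(3) by (simp add: inner_add_left)
  also have "\<dots> = 0" using o1 o3 by (simp add: inner_commute)
  finally have "z2 = 0" by simp
  thus "z \<in> Fsub X p" using z12 E1F by auto
qed



lemma br_span:
  fixes br :: "'a::euclidean_space \<Rightarrow> 'a \<Rightarrow> 'a"
  assumes b: "bilinear br" and F: "subspace F" and x: "x \<in> span S" and y: "y \<in> span T"
    and H: "\<And>u v. u \<in> S \<Longrightarrow> v \<in> T \<Longrightarrow> br u v \<in> F"
  shows "br x y \<in> F"
proof -
  have lin1: "linear (\<lambda>x. br x v)" for v using b unfolding bilinear_def by blast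
  have lin2: "linear (\<lambda>y. br u y)" for u using b unfolding bilinear_def by blast
  have H2: "br u y \<in> F" if u: "u \<in> S" for u
  proof -
    have "subspace {y. br u y \<in> F}" using linear_subspace_vimage[OF lin2 F] by (simp add: vimage_def)
    moreover have "T \<subseteq> {y. br u y \<in> F}" using H u by blast
    ultimately have "span T \<subseteq> {y. br u y \<in> F}" by (rule span_minimal[rotated])
    thus ?thesis using y by blast
  qed
  have "subspace {x. br x y \<in> F}" using linear_subspace_vimage[OF lin1 F] by (simp add: vimage_def)
  moreover have "S \<subseteq> {x. br x y \<in> F}" using H2 by blast
  ultimately have "span S \<subseteq> {x. br x y \<in> F}" by (rule span_minimal[rotated])
  thus ?thesis using x by blast
qed

lemma Fsub_zero_neg: "a < 0 \<Longrightarrow> Fsub (0::'a::euclidean_space \<Rightarrow>\<^sub>L 'a) a = {0}"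
  unfolding Fsub_def
proof -
  assume a: "a < 0"
  have e: "{x::'a. x \<noteq> 0 \<and> (\<exists>c\<le>a. (0::'a \<Rightarrow>\<^sub>L 'a) x = c *\<^sub>R x)} = {}" using a by auto
  show "span {x::'a. x \<noteq> 0 \<and> (\<exists>c\<le>a. (0::'a \<Rightarrow>\<^sub>L 'a) x = c *\<^sub>R x)} = {0}"
    unfolding e by (rule span_empty)
qed

lemma Fsub_zero_nonneg: "0 \<le> a \<Longrightarrow> Fsub (0::'a::euclidean_space \<Rightarrow>\<^sub>L 'a) a = UNIV"
proof -
  assume a: "0 \<le> a"
  have "x \<in> Fsub (0::'a \<Rightarrow>\<^sub>L 'a) a" for x by (rule Fsub_eig[of _ _ 0]) (use a in auto)
  thus ?thesis by blast
qed

lemma filt_zero: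
  assumes b: "bilinear br"
  shows "filtering br (0::'a::euclidean_space \<Rightarrow>\<^sub>L 'a)"
  unfolding filtering_def
proof (intro allI ballI)
  fix a b' x y assume x: "x \<in> Fsub (0::'a \<Rightarrow>\<^sub>L 'a) a" and y: "y \<in> Fsub (0::'a \<Rightarrow>\<^sub>L 'a) b'"
  show "br x y \<in> Fsub 0 (a + b')"
  proof (cases "a < 0 \<or> b' < 0")
    case True
    hence "x = 0 \<or> y = 0" using x y Fsub_zero_neg by blast
    hence "br x y = 0" using bilinear_lzero[OF b] bilinear_rzero[OF b] by auto
    thus ?thesis using Fsub_subspace subspace_0 by metis
  next
    case False hence "0 \<le> a + b'" by linarith
    from Fsub_zero_nonneg[OF this] show ?thesis by (metis UNIV_I)
  qed
qed

lemma Fsub_scale: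
  fixes X :: "'a::euclidean_space \<Rightarrow>\<^sub>L 'a"
  assumes c: "0 < c"
  shows "Fsub (c *\<^sub>R X) a = Fsub X (a / c)"
proof -
  have "{x. x \<noteq> 0 \<and> (\<exists>d\<le>a. (c *\<^sub>R X) x = d *\<^sub>R x)} = {x. x \<noteq> 0 \<and> (\<exists>d\<le>a / c. X x = d *\<^sub>R x)}"
  proof (intro Collect_cong conj_cong refl iffI)
    fix x assume "\<exists>d\<le>a. (c *\<^sub>R X) x = d *\<^sub>R x"
    then obtain d where d: "d \<le> a" "c *\<^sub>R X x = d *\<^sub>R x" by (auto simp: blinfun.scaleR_left)
    have "X x = (1 / c) *\<^sub>R (c *\<^sub>R X x)" using c by simp
    also have "\<dots> = (d / c) *\<^sub>R x" using d(2) by simp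
    finally have "X x = (d / c) *\<^sub>R x" .
    moreover have "d / c \<le> a / c" using d c by (simp add: divide_right_mono)
    ultimately show "\<exists>d\<le>a / c. X x = d *\<^sub>R x" by blast
  next
    fix x assume "\<exists>d\<le>a / c. X x = d *\<^sub>R x"
    then obtain d where d: "d \<le> a / c" "X x = d *\<^sub>R x" by auto
    hence "(c *\<^sub>R X) x = (c * d) *\<^sub>R x" by (simp add: blinfun.scaleR_left)
    moreover have "c * d \<le> a" using d c by (simp add: field_simps)
    ultimately show "\<exists>d\<le>a. (c *\<^sub>R X) x = d *\<^sub>R x" by blast
  qed
  thus ?thesis unfolding Fsub_def by simp
qed

lemma filt_scale:
  assumes b: "bilinear br" and f: "filtering br X" and c: "0 \<le> c"
  shows "filtering br (c *\<^sub>R X)"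
proof (cases "c = 0")
  case True thus ?thesis using filt_zero[OF b] by simp
next
  case False
  hence c: "0 < c" using c by simp
  show ?thesis unfolding filtering_def Fsub_scale[OF c]
  proof (intro allI ballI)
    fix a b x y assume x: "x \<in> Fsub X (a / c)" and y: "y \<in> Fsub X (b / c)"
    have "br x y \<in> Fsub X (a / c + b / c)" using f x y unfolding filtering_def by blast
    thus "br x y \<in> Fsub X ((a + b) / c)" by (simp add: add_divide_distrib)
  qed
qed



lemma sym_add: "symmetric_op X \<Longrightarrow> symmetric_op Y \<Longrightarrow> symmetric_op (X + Y)"
  unfolding symmetric_op_def by (simp add: blinfun.add_left inner_add_left inner_add_right)

lemma sym_scale: "symmetric_op X \<Longrightarrow> symmetric_op (c *\<^sub>R X)"
  unfolding symmetric_op_def by (simp add: blinfun.scaleR_left)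

lemma sym_zero: "symmetric_op (0::'a::euclidean_space \<Rightarrow>\<^sub>L 'a)"
  unfolding symmetric_op_def by simp

lemma sym_sum: "(\<And>i. i \<in> S \<Longrightarrow> symmetric_op (Y i)) \<Longrightarrow> symmetric_op (\<Sum>i\<in>S. Y i)"
  by (induction S rule: infinite_finite_induct) (auto simp: sym_zero sym_add)

lemma filt_add:
  fixes X Y :: "'a::euclidean_space \<Rightarrow>\<^sub>L 'a"
  assumes b: "bilinear br" and sX: "symmetric_op X" and sY: "symmetric_op Y"
    and cm: "\<And>x. X (Y x) = Y (X x)" and fX: "filtering br X" and fY: "filtering br Y"
  shows "filtering br (X + Y)"
proof -
  define Z where "Z = X + Y"
  have sZ: "symmetric_op Z" unfolding Z_def using sX sY by (rule sym_add)
  have Zx: "Z v = X v + Y v" for v unfolding Z_def by (simp add: blinfun.add_left)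
  define J where "J l = {v. \<exists>\<alpha> \<beta>. X v = \<alpha> *\<^sub>R v \<and> Y v = \<beta> *\<^sub>R v \<and> \<alpha> + \<beta> = l}" for l
  have joint: "u \<in> span (J l)" if u: "Z u = l *\<^sub>R u" for u l
  proof -
    define W where "W = {v. Z v = l *\<^sub>R v}"
    have sW: "subspace W" unfolding subspace_def W_def
      by (auto simp: blinfun.add_right blinfun.scaleR_right scaleR_add_right)
    have iW: "X v \<in> W" if "v \<in> W" for v
    proof -
      have "Z (X v) = X (Z v)" unfolding Zx by (simp add: blinfun.add_right cm)
      also have "\<dots> = l *\<^sub>R X v" using that unfolding W_def by (simp add: blinfun.scaleR_right)
      finally show ?thesis unfolding W_def by simp
    qed
    have "W \<subseteq> span (eigs X W)" by (rule spectral[OF sX sW iW])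
    moreover have "eigs X W \<subseteq> J l"
    proof
      fix v assume "v \<in> eigs X W"
      then obtain \<alpha> where v: "Z v = l *\<^sub>R v" "X v = \<alpha> *\<^sub>R v" unfolding eigs_def W_def by auto
      have "Y v = (l - \<alpha>) *\<^sub>R v" using v unfolding Zx by (simp add: scaleR_diff_left eq_diff_eq add.commute)
      thus "v \<in> J l" unfolding J_def using v(2) by force
    qed
    ultimately have "W \<subseteq> span (J l)" using span_mono by blast
    thus ?thesis using u unfolding W_def by blast
  qed
  have inter: "z \<in> Fsub Z (p + q)" if zX: "z \<in> Fsub X p" and zY: "z \<in> Fsub Y q" for z p q
    unfolding Fsub_char[OF sZ]
  proof (intro allI impI)
    fix w c assume wc: "Z w = c *\<^sub>R w \<and> p + q < c"
    show "inner z w = 0"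
    proof (rule inner_zero_span[OF joint[OF conjunct1[OF wc]]])
      fix v assume "v \<in> J c"
      then obtain \<alpha> \<beta> where v: "X v = \<alpha> *\<^sub>R v" "Y v = \<beta> *\<^sub>R v" "\<alpha> + \<beta> = c" unfolding J_def by blast
      show "inner z v = 0"
      proof (cases "p < \<alpha>")
        case True thus ?thesis using zX v(1) unfolding Fsub_char[OF sX] by blast
      next
        case False hence "q < \<beta>" using v(3) wc by linarith
        thus ?thesis using zY v(2) unfolding Fsub_char[OF sY] by blast
      qed
    qed
  qed
  define JJ where "JJ a = {v. \<exists>\<alpha> \<beta>. X v = \<alpha> *\<^sub>R v \<and> Y v = \<beta> *\<^sub>R v \<and> \<alpha> + \<beta> \<le> a}" for a
  have toJJ: "Fsub Z a \<subseteq> span (JJ a)" for a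
  proof -
    have "{x. x \<noteq> 0 \<and> (\<exists>c\<le>a. Z x = c *\<^sub>R x)} \<subseteq> span (JJ a)"
    proof
      fix u assume "u \<in> {x. x \<noteq> 0 \<and> (\<exists>c\<le>a. Z x = c *\<^sub>R x)}"
      then obtain l where l: "l \<le> a" "Z u = l *\<^sub>R u" by auto
      have "J l \<subseteq> JJ a" unfolding J_def JJ_def using l(1) by auto
      hence "span (J l) \<subseteq> span (JJ a)" by (rule span_mono)
      thus "u \<in> span (JJ a)" using joint[OF l(2)] by blast
    qed
    thus ?thesis unfolding Fsub_def by (rule span_minimal[OF _ subspace_span])
  qed
  have "filtering br Z" unfolding filtering_def
  proof (intro allI ballI)
    fix a b' x y assume x: "x \<in> Fsub Z a" and y: "y \<in> Fsub Z b'"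
    show "br x y \<in> Fsub Z (a + b')"
    proof (rule br_span[OF b Fsub_subspace])
      show "x \<in> span (JJ a)" using x toJJ by blast
      show "y \<in> span (JJ b')" using y toJJ by blast
      fix u v assume u: "u \<in> JJ a" and v: "v \<in> JJ b'"
      obtain \<alpha> \<beta> where u': "X u = \<alpha> *\<^sub>R u" "Y u = \<beta> *\<^sub>R u" "\<alpha> + \<beta> \<le> a" using u unfolding JJ_def by blast
      obtain \<alpha>' \<beta>' where v': "X v = \<alpha>' *\<^sub>R v" "Y v = \<beta>' *\<^sub>R v" "\<alpha>' + \<beta>' \<le> b'" using v unfolding JJ_def by blast
      have "br u v \<in> Fsub X (\<alpha> + \<alpha>')"
        using fX Fsub_eig[OF u'(1) order_refl] Fsub_eig[OF v'(1) order_refl] unfolding filtering_def by blast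
      moreover have "br u v \<in> Fsub Y (\<beta> + \<beta>')"
        using fY Fsub_eig[OF u'(2) order_refl] Fsub_eig[OF v'(2) order_refl] unfolding filtering_def by blast
      ultimately have "br u v \<in> Fsub Z ((\<alpha> + \<alpha>') + (\<beta> + \<beta>'))" by (rule inter)
      moreover have "(\<alpha> + \<alpha>') + (\<beta> + \<beta>') \<le> a + b'" using u'(3) v'(3) by linarith
      ultimately show "br u v \<in> Fsub Z (a + b')" using Fsub_mono by blast
    qed
  qed
  thus ?thesis unfolding Z_def .
qed

lemma filt_sum:
  fixes Y :: "'i \<Rightarrow> 'a::euclidean_space \<Rightarrow>\<^sub>L 'a"
  assumes b: "bilinear br"
  shows "finite S \<Longrightarrow> (\<And>i. i \<in> S \<Longrightarrow> symmetric_op (Y i) \<and> filtering br (Y i) \<and> 0 \<le> w i)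
    \<Longrightarrow> (\<And>i j x. i \<in> S \<Longrightarrow> j \<in> S \<Longrightarrow> Y i (Y j x) = Y j (Y i x))
    \<Longrightarrow> filtering br (\<Sum>i\<in>S. w i *\<^sub>R Y i)"
proof (induction S rule: finite_induct)
  case empty thus ?case using filt_zero[OF b] by simp
next
  case (insert a S)
  have sa: "symmetric_op (w a *\<^sub>R Y a)" using insert.prems(1) sym_scale by blast
  have ss: "symmetric_op (\<Sum>i\<in>S. w i *\<^sub>R Y i)" using insert.prems(1) sym_scale by (intro sym_sum) blast
  have fa: "filtering br (w a *\<^sub>R Y a)" using insert.prems(1) filt_scale[OF b] by blast
  have fs: "filtering br (\<Sum>i\<in>S. w i *\<^sub>R Y i)" using insert.IH insert.prems by blast
  have cm: "(w a *\<^sub>R Y a) ((\<Sum>i\<in>S. w i *\<^sub>R Y i) x) = (\<Sum>i\<in>S. w i *\<^sub>R Y i) ((w a *\<^sub>R Y a) x)" for x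
  proof -
    have "(w a *\<^sub>R Y a) ((\<Sum>i\<in>S. w i *\<^sub>R Y i) x) = (\<Sum>i\<in>S. w a *\<^sub>R w i *\<^sub>R Y a (Y i x))"
      by (simp add: blinfun.sum_left blinfun.sum_right blinfun.scaleR_left blinfun.scaleR_right scaleR_sum_right mult.commute)
    also have "\<dots> = (\<Sum>i\<in>S. w i *\<^sub>R w a *\<^sub>R Y i (Y a x))"
      using insert.prems(2) by (intro sum.cong refl) auto
    also have "\<dots> = (\<Sum>i\<in>S. w i *\<^sub>R Y i) ((w a *\<^sub>R Y a) x)"
      by (simp add: blinfun.sum_left blinfun.scaleR_left blinfun.scaleR_right scaleR_sum_right mult.commute)
    finally show ?thesis .
  qed
  have "filtering br (w a *\<^sub>R Y a + (\<Sum>i\<in>S. w i *\<^sub>R Y i))"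
    by (rule filt_add[OF b sa ss cm fa fs])
  thus ?case using insert.hyps by simp
qed



lemma chi_eig:
  fixes k :: "'a::euclidean_space set"
  assumes k: "subspace k" "k \<noteq> UNIV" and x: "x \<noteq> 0" and e: "chibar k x = l *\<^sub>R x"
  shows "(l = 0 \<and> x \<in> k) \<or> (l = 1 / real (DIM('a) - dim k) \<and> projop k x = 0)"
proof -
  define c where "c = 1 / real (DIM('a) - dim k)"
  have c: "0 < c" unfolding c_def using chi_pos[OF k] .
  have ch: "chibar k x = c *\<^sub>R (x - projop k x)" unfolding c_def by (rule chibar_apply)
  have "projop k (chibar k x) = c *\<^sub>R (projop k x - projop k (projop k x))"
    unfolding ch by (simp add: blinfun.scaleR_right blinfun.diff_right)
  also have "\<dots> = 0" using P_idem[OF k(1)] by simp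
  finally have "l *\<^sub>R projop k x = 0" using e by (simp add: blinfun.scaleR_right)
  hence L: "l = 0 \<or> projop k x = 0" by simp
  show ?thesis
  proof (cases "l = 0")
    case True
    hence "c *\<^sub>R (x - projop k x) = 0" using e ch by simp
    hence "x = projop k x" using c by simp
    hence "x \<in> k" using P_in[OF k(1)] by metis
    thus ?thesis using True by simp
  next
    case False
    hence P0: "projop k x = 0" using L by simp
    hence "c *\<^sub>R x = l *\<^sub>R x" using e ch by simp
    hence "(c - l) *\<^sub>R x = 0" by (simp add: scaleR_diff_left)
    hence "l = c" using x by simp
    thus ?thesis using P0 unfolding c_def by simp
  qed
qed

lemma chibar_filtering:
  fixes k :: "'a::euclidean_space set"
  assumes lie: "lie_algebra_with_invariant_Q br" and ka: "subalgebra br k" and kU: "k \<noteq> UNIV"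
  shows "filtering br (chibar k)"
proof -
  have k: "subspace k" using ka unfolding subalgebra_def by auto
  have b: "bilinear br" using lie unfolding lie_algebra_with_invariant_Q_def by auto
  define c where "c = 1 / real (DIM('a) - dim k)"
  have c: "0 < c" unfolding c_def using chi_pos[OF k kU] .
  have neg: "Fsub (chibar k) a \<subseteq> {0}" if a: "a < 0" for a
  proof -
    have e: "{x. x \<noteq> 0 \<and> (\<exists>l\<le>a. chibar k x = l *\<^sub>R x)} = {}"
      using chi_eig[OF k kU] a c unfolding c_def by fastforce
    show ?thesis unfolding Fsub_def e span_empty by simp
  qed
  have small: "Fsub (chibar k) a \<subseteq> k" if a: "a < c" for a
  proof -
    have "{x. x \<noteq> 0 \<and> (\<exists>l\<le>a. chibar k x = l *\<^sub>R x)} \<subseteq> k"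
      using chi_eig[OF k kU] a unfolding c_def by fastforce
    thus ?thesis unfolding Fsub_def using k by (rule span_minimal)
  qed
  have kin: "k \<subseteq> Fsub (chibar k) a" if a: "0 \<le> a" for a
  proof
    fix x assume x: "x \<in> k"
    have "chibar k x = 0 *\<^sub>R x" using x P_id[OF k] by (simp add: chibar_apply)
    thus "x \<in> Fsub (chibar k) a" using a by (rule Fsub_eig)
  qed
  have big: "Fsub (chibar k) a = UNIV" if a: "c \<le> a" for a
  proof -
    have "x \<in> Fsub (chibar k) a" for x
    proof -
      have "projop k x \<in> Fsub (chibar k) a" using kin[of a] a c P_in[OF k] by auto
      moreover have "chibar k (x - projop k x) = c *\<^sub>R (x - projop k x)"
        unfolding c_def chibar_apply using P_idem[OF k] by (simp add: blinfun.diff_right)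
      hence "x - projop k x \<in> Fsub (chibar k) a" using a by (rule Fsub_eig)
      ultimately have "projop k x + (x - projop k x) \<in> Fsub (chibar k) a"
        using Fsub_subspace subspace_add by blast
      thus ?thesis by simp
    qed
    thus ?thesis by blast
  qed
  show ?thesis unfolding filtering_def
  proof (intro allI ballI)
    fix a b' x y assume x: "x \<in> Fsub (chibar k) a" and y: "y \<in> Fsub (chibar k) b'"
    show "br x y \<in> Fsub (chibar k) (a + b')"
    proof (cases "a < 0 \<or> b' < 0")
      case True
      hence "x = 0 \<or> y = 0" using x y neg by blast
      hence "br x y = 0" using bilinear_lzero[OF b] bilinear_rzero[OF b] by auto
      thus ?thesis using Fsub_subspace subspace_0 by metis
    next
      case False
      show ?thesis
      proof (cases "c \<le> a + b'")
        case True thus ?thesis using big by blast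
      next
        case F2: False
        hence "a < c" "b' < c" using False by linarith+
        hence "x \<in> k" "y \<in> k" using x y small by blast+
        hence "br x y \<in> k" using ka unfolding subalgebra_def by blast
        moreover have "0 \<le> a + b'" using False by linarith
        ultimately show ?thesis using kin by blast
      qed
    qed
  qed
qed

lemma D_mono: "A \<in> Dset br Aut k \<Longrightarrow> j \<subseteq> k \<Longrightarrow> j \<noteq> UNIV \<Longrightarrow> A \<in> Dset br Aut j"
  unfolding Dset_def by auto

lemma X_mono: "A \<in> Xset br Aut k \<Longrightarrow> j \<subseteq> k \<Longrightarrow> j \<noteq> UNIV \<Longrightarrow> A \<in> Xset br Aut j"
  unfolding Xset_def using D_mono by blast

lemma chibar_X:
  assumes lie: "lie_algebra_with_invariant_Q br" and aut: "automorphism_group br h Aut"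
    and kP: "k \<in> Pset br Aut h" and kU: "k \<noteq> UNIV" and jk: "j \<subseteq> k" and jU: "j \<noteq> UNIV"
  shows "chibar k \<in> Xset br Aut j"
proof -
  have D: "chibar k \<in> Dset br Aut j" by (rule chibar_D[OF assms])
  have ka: "subalgebra br k" using kP unfolding Pset_def by auto
  have "filtering br (chibar k)" by (rule chibar_filtering[OF lie ka kU])
  thus ?thesis using D unfolding Xset_def Fplus_def Dset_def by auto
qed

lemma D_comb:
  fixes Y :: "'i \<Rightarrow> 'a::euclidean_space \<Rightarrow>\<^sub>L 'a"
  assumes lie: "lie_algebra_with_invariant_Q br" and fin: "finite S"
    and Y: "\<And>i. i \<in> S \<Longrightarrow> Y i \<in> Dset br Aut j" and w: "\<And>i. i \<in> S \<Longrightarrow> 0 \<le> w i"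
    and s1: "(\<Sum>i\<in>S. w i) = 1"
  shows "(\<Sum>i\<in>S. w i *\<^sub>R Y i) \<in> Dset br Aut j"
proof -
  define C where "C = (\<Sum>i\<in>S. w i *\<^sub>R Y i)"
  have b: "bilinear br" using lie unfolding lie_algebra_with_invariant_Q_def by auto
  have Capp: "C x = (\<Sum>i\<in>S. w i *\<^sub>R Y i x)" for x
    unfolding C_def by (simp add: blinfun.sum_left blinfun.scaleR_left)
  have "S \<noteq> {}" using s1 by auto
  then obtain i0 where "i0 \<in> S" by blast
  hence jU: "j \<noteq> UNIV" using Y unfolding Dset_def by blast
  have symY: "symmetric_op (Y i)" if "i \<in> S" for i using Y[OF that] unfolding Dset_def by blast
  have sym: "symmetric_op C" unfolding C_def using symY sym_scale by (intro sym_sum) blast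
  have psd: "0 \<le> inner (C x) x" for x
  proof -
    have "inner (C x) x = (\<Sum>i\<in>S. w i * inner (Y i x) x)" unfolding Capp by (simp add: inner_sum_left)
    also have "\<dots> \<ge> 0"
    proof (rule sum_nonneg)
      fix i assume i: "i \<in> S"
      have "nonneg_spectrum (Y i)" using Y[OF i] unfolding Dset_def by blast
      hence "0 \<le> inner (Y i x) x" using psd_of_nonneg symY[OF i] by blast
      thus "0 \<le> w i * inner (Y i x) x" using w[OF i] by simp
    qed
    finally show ?thesis .
  qed
  have tr: "trace_op C = 1"
  proof -
    have "trace_op C = (\<Sum>i\<in>S. w i * trace_op (Y i))" unfolding C_def by (simp add: trace_sum trace_scale)
    also have "\<dots> = (\<Sum>i\<in>S. w i)" using Y unfolding Dset_def by (intro sum.cong) auto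
    finally show ?thesis using s1 by simp
  qed
  have aut: "C o\<^sub>L \<sigma> = \<sigma> o\<^sub>L C" if s: "\<sigma> \<in> Aut" for \<sigma>
  proof (rule blinfun_eqI)
    fix x
    have c: "Y i (\<sigma> x) = \<sigma> (Y i x)" if i: "i \<in> S" for i
    proof -
      have "Y i o\<^sub>L \<sigma> = \<sigma> o\<^sub>L Y i" using Y[OF i] s unfolding Dset_def by blast
      hence "(Y i o\<^sub>L \<sigma>) x = (\<sigma> o\<^sub>L Y i) x" by simp
      thus ?thesis by simp
    qed
    have "(C o\<^sub>L \<sigma>) x = (\<Sum>i\<in>S. w i *\<^sub>R \<sigma> (Y i x))" using c by (simp add: Capp)
    also have "\<dots> = \<sigma> (C x)" by (simp add: Capp blinfun.sum_right blinfun.scaleR_right)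
    finally show "(C o\<^sub>L \<sigma>) x = (\<sigma> o\<^sub>L C) x" by simp
  qed
  have ann: "C x = 0" if "x \<in> j" for x
    using Y that unfolding Capp Dset_def by (auto intro!: sum.neutral)
  have ad: "C (br X Z) = br X (C Z)" if X: "X \<in> j" for X Z
  proof -
    have lin: "linear (br X)" using b unfolding bilinear_def by blast
    have "C (br X Z) = (\<Sum>i\<in>S. w i *\<^sub>R br X (Y i Z))"
      unfolding Capp using Y X unfolding Dset_def by (intro sum.cong) auto
    also have "\<dots> = br X (C Z)" unfolding Capp
      by (simp add: linear_sum[OF lin] linear_scale[OF lin])
    finally show ?thesis .
  qed
  show ?thesis unfolding C_def[symmetric] Dset_def
    using jU sym psd_nonneg_spec[OF psd] tr aut ann ad by blast
qed

lemma X_comb: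
  fixes Y :: "'i \<Rightarrow> 'a::euclidean_space \<Rightarrow>\<^sub>L 'a"
  assumes lie: "lie_algebra_with_invariant_Q br" and fin: "finite S"
    and Y: "\<And>i. i \<in> S \<Longrightarrow> Y i \<in> Xset br Aut j" and w: "\<And>i. i \<in> S \<Longrightarrow> 0 \<le> w i"
    and s1: "(\<Sum>i\<in>S. w i) = 1"
    and cm: "\<And>i i' x. i \<in> S \<Longrightarrow> i' \<in> S \<Longrightarrow> Y i (Y i' x) = Y i' (Y i x)"
  shows "(\<Sum>i\<in>S. w i *\<^sub>R Y i) \<in> Xset br Aut j"
proof -
  have b: "bilinear br" using lie unfolding lie_algebra_with_invariant_Q_def by auto
  have D: "(\<Sum>i\<in>S. w i *\<^sub>R Y i) \<in> Dset br Aut j"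
    using D_comb[OF lie fin _ w s1] Y unfolding Xset_def by blast
  have "filtering br (\<Sum>i\<in>S. w i *\<^sub>R Y i)"
  proof (rule filt_sum[OF b fin])
    fix i assume "i \<in> S"
    thus "symmetric_op (Y i) \<and> filtering br (Y i) \<and> 0 \<le> w i"
      using Y w unfolding Xset_def Fplus_def by blast
  next
    fix i i' x assume "i \<in> S" "i' \<in> S"
    thus "Y i (Y i' x) = Y i' (Y i x)" by (rule cm)
  qed
  thus ?thesis using D unfolding Xset_def Fplus_def Dset_def by auto
qed



lemma opnorm2_L2:
  fixes X :: "'a::euclidean_space \<Rightarrow>\<^sub>L 'a"
  assumes "symmetric_op X"
  shows "opnorm2 X = L2_set (\<lambda>b. norm (X b)) Basis"
proof -
  have "trace_op (X o\<^sub>L X) = (\<Sum>b\<in>Basis. (norm (X b))^2)"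
    unfolding trace_op_def using assms unfolding symmetric_op_def
    by (intro sum.cong refl) (simp add: power2_norm_eq_inner)
  thus ?thesis unfolding opnorm2_def L2_set_def by simp
qed

lemma opn_nonneg: "symmetric_op X \<Longrightarrow> 0 \<le> opnorm2 X"
  by (simp add: opnorm2_L2)

lemma opn_tri:
  fixes X Y :: "'a::euclidean_space \<Rightarrow>\<^sub>L 'a"
  assumes "symmetric_op X" "symmetric_op Y"
  shows "opnorm2 (X + Y) \<le> opnorm2 X + opnorm2 Y"
proof -
  have "opnorm2 (X + Y) = L2_set (\<lambda>b. norm (X b + Y b)) Basis"
    using opnorm2_L2[OF sym_add[OF assms]] by (simp add: blinfun.add_left)
  also have "\<dots> \<le> L2_set (\<lambda>b. norm (X b) + norm (Y b)) Basis"
    by (rule L2_set_mono) (auto simp: norm_triangle_ineq)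
  also have "\<dots> \<le> L2_set (\<lambda>b. norm (X b)) Basis + L2_set (\<lambda>b. norm (Y b)) Basis"
    by (rule L2_set_triangle_ineq)
  finally show ?thesis using opnorm2_L2[OF assms(1)] opnorm2_L2[OF assms(2)] by simp
qed

lemma opn_scale:
  fixes X :: "'a::euclidean_space \<Rightarrow>\<^sub>L 'a"
  assumes "symmetric_op X"
  shows "opnorm2 (c *\<^sub>R X) = \<bar>c\<bar> * opnorm2 X"
proof -
  have "opnorm2 (c *\<^sub>R X) = L2_set (\<lambda>b. \<bar>c\<bar> * norm (X b)) Basis"
    using opnorm2_L2[OF sym_scale[OF assms]] by (simp add: blinfun.scaleR_left)
  also have "\<dots> = \<bar>c\<bar> * L2_set (\<lambda>b. norm (X b)) Basis"
    by (rule L2_set_right_distrib[symmetric]) simp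
  finally show ?thesis using opnorm2_L2[OF assms] by simp
qed

lemma opn_sum:
  fixes Y :: "'i \<Rightarrow> 'a::euclidean_space \<Rightarrow>\<^sub>L 'a"
  shows "finite S \<Longrightarrow> (\<And>i. i \<in> S \<Longrightarrow> symmetric_op (Y i)) \<Longrightarrow> opnorm2 (\<Sum>i\<in>S. Y i) \<le> (\<Sum>i\<in>S. opnorm2 (Y i))"
proof (induction S rule: finite_induct)
  case empty thus ?case by (simp add: opnorm2_def trace_op_def)
next
  case (insert a S)
  have "opnorm2 (\<Sum>i\<in>insert a S. Y i) = opnorm2 (Y a + (\<Sum>i\<in>S. Y i))" using insert.hyps by simp
  also have "\<dots> \<le> opnorm2 (Y a) + opnorm2 (\<Sum>i\<in>S. Y i)"
    using insert.prems by (intro opn_tri) (auto intro!: sym_sum)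
  also have "\<dots> \<le> opnorm2 (Y a) + (\<Sum>i\<in>S. opnorm2 (Y i))" using insert.IH insert.prems by simp
  finally show ?case using insert.hyps by simp
qed

lemma psd_cs:
  fixes X :: "'a::euclidean_space \<Rightarrow>\<^sub>L 'a"
  assumes sym: "symmetric_op X" and psd: "\<And>x. 0 \<le> inner (X x) x"
  shows "(inner (X u) v)^2 \<le> inner (X u) u * inner (X v) v"
proof -
  define A where "A = inner (X u) u"
  define B where "B = inner (X u) v"
  define C where "C = inner (X v) v"
  have S: "inner (X v) u = B" unfolding B_def using sym unfolding symmetric_op_def
    by (metis inner_commute)
  have q: "0 \<le> A + 2 * s * B + s^2 * C" for s
  proof -
    have "inner (X (u + s *\<^sub>R v)) (u + s *\<^sub>R v) = A + 2 * s * B + s^2 * C"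
      unfolding A_def C_def using S
      by (simp add: blinfun.add_right blinfun.scaleR_right inner_add_left inner_add_right
          power2_eq_square algebra_simps B_def)
    thus ?thesis using psd[of "u + s *\<^sub>R v"] by simp
  qed
  have A0: "0 \<le> A" unfolding A_def by (rule psd)
  have C0: "0 \<le> C" unfolding C_def by (rule psd)
  show ?thesis
  proof (cases "C = 0")
    case True
    have "B = 0"
    proof (rule ccontr)
      assume B: "B \<noteq> 0"
      have "0 \<le> A + 2 * (- (A + 1) / (2 * B)) * B" using q[of "- (A + 1) / (2 * B)"] True by simp
      also have "\<dots> = -1" using B by (simp add: field_simps)
      finally show False by simp
    qed
    thus ?thesis unfolding B_def[symmetric] A_def[symmetric] C_def[symmetric] using True by simp
  next
    case False
    hence Cp: "0 < C" using C0 by simp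
    have "0 \<le> A + 2 * (- B / C) * B + (- B / C)^2 * C" by (rule q)
    also have "\<dots> = A - B^2 / C" using Cp by (simp add: field_simps power2_eq_square)
    finally have "B^2 / C \<le> A" by simp
    hence "B^2 \<le> A * C" using Cp by (simp add: divide_le_eq)
    thus ?thesis unfolding A_def B_def C_def .
  qed
qed

lemma frob_le_trace_sq:
  fixes X :: "'a::euclidean_space \<Rightarrow>\<^sub>L 'a"
  assumes sym: "symmetric_op X" and psd: "\<And>x. 0 \<le> inner (X x) x"
  shows "(\<Sum>b\<in>Basis. (norm (X b))^2) \<le> (trace_op X)^2"
proof -
  have "(\<Sum>b\<in>Basis. (norm (X b))^2) = (\<Sum>b\<in>Basis. \<Sum>b'\<in>Basis. (inner (X b) b')^2)"
  proof (intro sum.cong refl)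
    fix b :: 'a
    have "(norm (X b))^2 = inner (X b) (X b)" by (rule power2_norm_eq_inner)
    also have "\<dots> = (\<Sum>b'\<in>Basis. inner (X b) b' * inner (X b) b')" by (rule euclidean_inner)
    finally show "(norm (X b))^2 = (\<Sum>b'\<in>Basis. (inner (X b) b')^2)" by (simp add: power2_eq_square)
  qed
  also have "\<dots> \<le> (\<Sum>b\<in>Basis. \<Sum>b'\<in>Basis. inner (X b) b * inner (X b') b')"
    by (intro sum_mono psd_cs[OF sym psd])
  also have "\<dots> = (trace_op X)^2"
    unfolding trace_op_def power2_eq_square by (simp add: sum_product)
  finally show ?thesis .
qed

lemma bound_chi:
  fixes X :: "'a::euclidean_space \<Rightarrow>\<^sub>L 'a"
  assumes XD: "X \<in> Dset br Aut k" and k: "subspace k"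
  shows "opnorm2 (X - chibar k) \<le> 1"
proof -
  have kU: "k \<noteq> UNIV" and sym: "symmetric_op X" and nn: "nonneg_spectrum X" and tr: "trace_op X = 1"
    and ann: "\<And>x. x \<in> k \<Longrightarrow> X x = 0" using XD unfolding Dset_def by auto
  define c where "c = 1 / real (DIM('a) - dim k)"
  have c: "0 < c" unfolding c_def using chi_pos[OF k kU] .
  have ch: "chibar k x = c *\<^sub>R (x - projop k x)" for x unfolding c_def by (rule chibar_apply)
  have symc: "symmetric_op (chibar k)" by (rule chibar_sym[OF k])
  have S: "\<And>u v. inner (X u) v = inner u (X v)" using sym unfolding symmetric_op_def by blast
  have Sc: "\<And>u v. inner (chibar k u) v = inner u (chibar k v)" using symc unfolding symmetric_op_def by blast
  have symD: "symmetric_op (X - chibar k)" using sym symc sym_add sym_scale[of "chibar k" "-1"]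
    by (metis (no_types, lifting) scaleR_minus1_left uminus_add_conv_diff)
  have t1: "(\<Sum>b\<in>Basis. inner (X b) (chibar k b)) = c"
  proof -
    have "(\<Sum>b\<in>Basis. inner (X b) (chibar k b)) = (\<Sum>b\<in>Basis. c * inner (X b) b - c * inner (X b) (projop k b))"
      unfolding ch by (simp add: inner_diff_right algebra_simps)
    also have "\<dots> = (\<Sum>b\<in>Basis. c * inner (X b) b)"
    proof (intro sum.cong refl)
      fix b :: 'a
      have "inner (X b) (projop k b) = inner b (X (projop k b))" by (rule S)
      also have "\<dots> = 0" using ann P_in[OF k] by simp
      finally show "c * inner (X b) b - c * inner (X b) (projop k b) = c * inner (X b) b" by simp
    qed
    also have "\<dots> = c" using tr unfolding trace_op_def by (simp add: sum_distrib_left[symmetric])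
    finally show ?thesis .
  qed
  have t2: "(\<Sum>b\<in>Basis. (norm (chibar k b))^2) = c"
  proof -
    have cc: "chibar k (chibar k b) = c *\<^sub>R chibar k b" for b
    proof -
      have "projop k (chibar k b) = 0" unfolding ch
        by (simp add: blinfun.scaleR_right blinfun.diff_right P_idem[OF k])
      thus ?thesis by (simp add: ch)
    qed
    have "(\<Sum>b\<in>Basis. (norm (chibar k b))^2) = (\<Sum>b\<in>Basis. inner (chibar k (chibar k b)) b)"
      using Sc by (intro sum.cong refl) (simp add: power2_norm_eq_inner)
    also have "\<dots> = c * trace_op (chibar k)" unfolding cc trace_op_def
      by (simp add: sum_distrib_left)
    also have "\<dots> = c" using chibar_trace[OF k kU] by simp
    finally show ?thesis .
  qed
  have t3: "(\<Sum>b\<in>Basis. (norm (X b))^2) \<le> 1"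
    using frob_le_trace_sq[OF sym psd_of_nonneg[OF sym nn]] tr by simp
  have "(\<Sum>b\<in>Basis. (norm (X b - chibar k b))^2)
      = (\<Sum>b\<in>Basis. (norm (X b))^2) - 2 * (\<Sum>b\<in>Basis. inner (X b) (chibar k b)) + (\<Sum>b\<in>Basis. (norm (chibar k b))^2)"
    by (simp add: power2_norm_eq_inner inner_diff_left inner_diff_right inner_commute
        sum_subtractf sum.distrib sum_distrib_left algebra_simps)
  also have "\<dots> \<le> 1" using t1 t2 t3 c by simp
  finally have "(\<Sum>b\<in>Basis. (norm ((X - chibar k) b))^2) \<le> 1" by (simp add: blinfun.diff_left)
  hence "L2_set (\<lambda>b. norm ((X - chibar k) b)) Basis \<le> 1" unfolding L2_set_def by simp
  thus ?thesis using opnorm2_L2[OF symD] by simp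
qed



lemma hull_list:
  fixes xs :: "'v::real_vector list"
  assumes "x \<in> convex hull (set xs)"
  shows "\<exists>l. (\<forall>i<length xs. 0 \<le> l i) \<and> (\<Sum>i<length xs. l i) = 1 \<and> x = (\<Sum>i<length xs. l i *\<^sub>R xs ! i)"
proof -
  define R where "R = {y. \<exists>l. (\<forall>i<length xs. 0 \<le> l i) \<and> (\<Sum>i<length xs. l i) = 1 \<and> y = (\<Sum>i<length xs. l i *\<^sub>R xs ! i)}"
  have "set xs \<subseteq> R"
  proof
    fix y assume "y \<in> set xs"
    then obtain j where j: "j < length xs" "y = xs ! j" by (auto simp: in_set_conv_nth)
    define l where "l i = (if i = j then 1 else 0::real)" for i
    have "(\<Sum>i<length xs. l i) = 1" unfolding l_def using j by simp
    moreover have "(\<Sum>i<length xs. l i *\<^sub>R xs ! i) = y"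
    proof -
      have "(\<Sum>i<length xs. l i *\<^sub>R xs ! i) = (\<Sum>i<length xs. if i = j then xs ! i else 0)"
        by (intro sum.cong) (auto simp: l_def)
      also have "\<dots> = xs ! j" using j by simp
      finally show ?thesis using j by simp
    qed
    ultimately show "y \<in> R" unfolding R_def l_def by (intro CollectI exI[of _ l]) (auto simp: l_def)
  qed
  moreover have "convex R" unfolding convex_def
  proof (intro ballI allI impI)
    fix y z :: 'v and u v :: real assume y: "y \<in> R" and z: "z \<in> R" and uv: "0 \<le> u" "0 \<le> v" "u + v = 1"
    obtain l where l: "\<forall>i<length xs. 0 \<le> l i" "(\<Sum>i<length xs. l i) = 1" "y = (\<Sum>i<length xs. l i *\<^sub>R xs ! i)"
      using y unfolding R_def by blast
    obtain l' where l': "\<forall>i<length xs. 0 \<le> l' i" "(\<Sum>i<length xs. l' i) = 1" "z = (\<Sum>i<length xs. l' i *\<^sub>R xs ! i)"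
      using z unfolding R_def by blast
    define l'' where "l'' i = u * l i + v * l' i" for i
    have "\<forall>i<length xs. 0 \<le> l'' i" unfolding l''_def using l(1) l'(1) uv by simp
    moreover have "(\<Sum>i<length xs. l'' i) = 1" unfolding l''_def
      using l(2) l'(2) uv by (simp add: sum.distrib sum_distrib_left[symmetric])
    moreover have "u *\<^sub>R y + v *\<^sub>R z = (\<Sum>i<length xs. l'' i *\<^sub>R xs ! i)" unfolding l''_def l(3) l'(3)
      by (simp add: scaleR_sum_right scaleR_add_left sum.distrib)
    ultimately show "u *\<^sub>R y + v *\<^sub>R z \<in> R" unfolding R_def by blast
  qed
  ultimately have "convex hull (set xs) \<subseteq> R" by (rule hull_minimal)
  thus ?thesis using assms unfolding R_def by blast
qed

lemma comm_chi:
  fixes g g' :: "'a::euclidean_space set"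
  assumes "subspace g" "subspace g'" "g \<subseteq> g' \<or> g' \<subseteq> g"
  shows "chibar g (chibar g' x) = chibar g' (chibar g x)"
proof -
  have pp: "projop g (projop g' x) = projop g' (projop g x)"
    using assms P_sub P_sub2 by metis
  show ?thesis unfolding chibar_apply
    by (simp add: blinfun.scaleR_right blinfun.diff_right pp algebra_simps)
qed

lemma comm_D:
  fixes g f :: "'a::euclidean_space set"
  assumes Y: "Y \<in> Dset br Aut f" and g: "subspace g" and gf: "g \<subseteq> f"
  shows "Y (chibar g x) = chibar g (Y x)"
proof -
  have sym: "symmetric_op Y" and ann: "\<And>x. x \<in> f \<Longrightarrow> Y x = 0" using Y unfolding Dset_def by auto
  have 1: "Y (projop g x) = 0" using ann P_in[OF g] gf by blast
  have 2: "projop g (Y x) = 0"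
  proof (rule P_zero[OF g])
    fix z assume "z \<in> g"
    hence "Y z = 0" using ann gf by blast
    thus "inner (Y x) z = 0" using sym unfolding symmetric_op_def by simp
  qed
  show ?thesis unfolding chibar_apply
    by (simp add: blinfun.scaleR_right blinfun.diff_right 1 2)
qed

lemma chibar_ker:
  fixes g :: "'a::euclidean_space set"
  assumes "subspace g" "g \<noteq> UNIV"
  shows "chibar g x = 0 \<longleftrightarrow> x \<in> g"
proof
  assume "chibar g x = 0"
  hence "x - projop g x = 0" using chi_pos[OF assms] unfolding chibar_apply by simp
  hence "x = projop g x" by simp
  thus "x \<in> g" using P_in[OF assms(1)] by metis
next
  assume "x \<in> g" thus "chibar g x = 0" using P_id[OF assms(1)] by (simp add: chibar_apply)
qed

definition psi :: "'a::euclidean_space set \<Rightarrow> 'a \<Rightarrow> ('a \<Rightarrow>\<^sub>L 'a) \<Rightarrow> real" where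
  "psi f v X = (\<Sum>b\<in>Basis. inner (X b) b) - (\<Sum>b\<in>Basis. inner (X (projop f b)) b)
     - real (DIM('a) - dim f) * inner (X v) v"

lemma psi_lin: "psi f v (a *\<^sub>R X + c *\<^sub>R Y) = a * psi f v X + c * psi f v Y"
  unfolding psi_def
  by (simp add: blinfun.add_left blinfun.scaleR_left inner_add_left sum.distrib sum_distrib_left algebra_simps)

lemma psi_D:
  fixes f :: "'a::euclidean_space set"
  assumes Y: "Y \<in> Dset br Aut f" and f: "subspace f" and v: "v \<in> f"
  shows "psi f v Y = 1"
proof -
  have tr: "trace_op Y = 1" and ann: "\<And>x. x \<in> f \<Longrightarrow> Y x = 0" using Y unfolding Dset_def by auto
  show ?thesis unfolding psi_def using tr ann[OF v] ann P_in[OF f] unfolding trace_op_def by simp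
qed

lemma psi_chi:
  fixes f g f2 :: "'a::euclidean_space set"
  assumes f: "subspace f" "f \<noteq> UNIV" and g: "subspace g" "g \<noteq> UNIV" and gf: "g \<subseteq> f"
    and v: "inner v v = 1" and vg: "\<And>z. z \<in> g \<Longrightarrow> inner v z = 0"
  shows "psi f v (chibar g) = 0"
proof -
  define c where "c = 1 / real (DIM('a) - dim g)"
  have dg: "dim g < DIM('a)" using dim_lt[OF g] .
  have df: "dim f < DIM('a)" using dim_lt[OF f] .
  have dgf: "dim g \<le> dim f" using dim_subset[OF gf] .
  have t1: "(\<Sum>b\<in>Basis. inner (chibar g b) b) = 1" using chibar_trace[OF g] unfolding trace_op_def .
  have "(\<Sum>b\<in>Basis. inner (chibar g (projop f b)) b)
      = (\<Sum>b\<in>Basis. c * (inner (projop f b) b - inner (projop g b) b))"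
    unfolding chibar_apply c_def[symmetric] using P_sub[OF g(1) f(1) gf]
    by (simp add: inner_diff_left)
  also have "\<dots> = c * ((\<Sum>b\<in>Basis. inner (projop f b) b) - (\<Sum>b\<in>Basis. inner (projop g b) b))"
    by (simp add: sum_distrib_left[symmetric] sum_subtractf)
  also have "\<dots> = c * (real (dim f) - real (dim g))"
    using trace_proj[OF f(1)] trace_proj[OF g(1)] unfolding trace_op_def by simp
  finally have t2: "(\<Sum>b\<in>Basis. inner (chibar g (projop f b)) b) = c * (real (dim f) - real (dim g))" .
  have "projop g v = 0" using P_zero[OF g(1)] vg by blast
  hence t3: "inner (chibar g v) v = c" unfolding chibar_apply c_def[symmetric] using v by simp
  have "psi f v (chibar g) = 1 - c * (real (dim f) - real (dim g)) - real (DIM('a) - dim f) * c"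
    unfolding psi_def t1 t2 t3 by simp
  also have "\<dots> = 1 - c * (real DIM('a) - real (dim g))"
    using df by (simp add: of_nat_diff algebra_simps)
  also have "real DIM('a) - real (dim g) = real (DIM('a) - dim g)" using dg by (simp add: of_nat_diff)
  also have "1 - c * real (DIM('a) - dim g) = 0" unfolding c_def using dg by simp
  finally show ?thesis .
qed



lemma B_D:
  assumes "B = Xset br Aut \<or> B = Dset br Aut" "A \<in> B k"
  shows "A \<in> Dset br Aut k"
  using assms unfolding Xset_def by auto

lemma B_chi:
  assumes BB: "B = Xset br Aut \<or> B = Dset br Aut"
    and lie: "lie_algebra_with_invariant_Q br" and aut: "automorphism_group br h Aut"
    and kP: "k \<in> Pset br Aut h" and kU: "k \<noteq> UNIV" and jk: "j \<subseteq> k" and jU: "j \<noteq> UNIV"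
  shows "chibar k \<in> B j"
  using BB chibar_X[OF lie aut kP kU jk jU] chibar_D[OF lie aut kP kU jk jU] by auto

lemma B_mono:
  assumes "B = Xset br Aut \<or> B = Dset br Aut" "A \<in> B k" "j \<subseteq> k" "j \<noteq> UNIV"
  shows "A \<in> B j"
  using assms X_mono D_mono by metis

lemma B_comb:
  fixes Y :: "'i \<Rightarrow> 'a::euclidean_space \<Rightarrow>\<^sub>L 'a"
  assumes BB: "B = Xset br Aut \<or> B = Dset br Aut"
    and lie: "lie_algebra_with_invariant_Q br" and fin: "finite S"
    and Y: "\<And>i. i \<in> S \<Longrightarrow> Y i \<in> B j" and w: "\<And>i. i \<in> S \<Longrightarrow> 0 \<le> w i"
    and s1: "(\<Sum>i\<in>S. w i) = 1"
    and cm: "\<And>i i' x. i \<in> S \<Longrightarrow> i' \<in> S \<Longrightarrow> Y i (Y i' x) = Y i' (Y i x)"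
  shows "(\<Sum>i\<in>S. w i *\<^sub>R Y i) \<in> B j"
proof (cases "B = Xset br Aut")
  case True thus ?thesis using X_comb[OF lie fin _ w s1 cm] Y by auto
next
  case False hence "B = Dset br Aut" using BB by blast
  thus ?thesis using D_comb[OF lie fin _ w s1] Y by auto
qed

lemma flag_nth:
  assumes "sorted_wrt (\<lambda>a b. b \<subset> a) gs" "i \<le> j" "j < length gs"
  shows "gs ! j \<subseteq> gs ! i"
proof (cases "i = j")
  case True thus ?thesis by simp
next
  case False hence "i < j" using assms(2) by simp
  thus ?thesis using assms(1,3) unfolding sorted_wrt_iff_nth_less by blast
qed

lemma opn_zero: "opnorm2 (0::'a::euclidean_space \<Rightarrow>\<^sub>L 'a) = 0"
  by (simp add: opnorm2_def trace_op_def)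



theorem proposition6p3:
  fixes br :: "'a::euclidean_space \<Rightarrow> 'a \<Rightarrow> 'a"
    and Aut :: "('a \<Rightarrow>\<^sub>L 'a) set"
    and h :: "'a set"
    and I :: "'a set set"
    and B :: "'a set \<Rightarrow> ('a \<Rightarrow>\<^sub>L 'a) set"
    and \<epsilon> :: real and L :: nat
    and A :: "'a \<Rightarrow>\<^sub>L 'a" and t :: real
  assumes "lie_algebra_with_invariant_Q br"
    and "subalgebra br h" and "h \<noteq> UNIV"
    and "automorphism_group br h Aut"
    and "B = Xset br Aut \<or> B = Dset br Aut"
    and "admissible_order_ideal br Aut h I"
    and "0 < \<epsilon>" and "\<epsilon> < 1"
    and "\<forall>fs\<in>flags I. length fs \<le> L"
    and "kappa_rel B (Pset br Aut h) I A t"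
    and "t < \<epsilon> ^ L"
  shows "\<exists>fs\<in>flags I. length fs > 0 \<and>
           (\<exists>C\<in>B (hd fs). opnorm2 (C - chibar (hd fs)) < \<epsilon> \<and>
              A \<in> convex hull (insert C {chibar (fs ! s) | s. 1 \<le> s \<and> s < length fs}))"
proof -
  note lie = assms(1) and aut = assms(4) and BB = assms(5) and eps = assms(7,8)
  define P where "P = Pset br Aut h"
  have IP: "I \<subseteq> P" and UI: "UNIV \<notin> I" using assms(6) unfolding admissible_order_ideal_def P_def by auto
  have Psub: "subspace k" if "k \<in> P" for k using that unfolding P_def Pset_def subalgebra_def by auto
  obtain fs where fsII: "fs \<in> IIset P I" and Abf: "A \<in> butterfly B fs"
    and cond: "if hd fs = UNIV then t = 0 else if length fs = 1 then t = 1
         else (\<exists>A1\<in>chihull (tl fs). \<exists>A2\<in>B (hd fs). A = (1 - t) *\<^sub>R A1 + t *\<^sub>R A2)"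
    using assms(10) unfolding kappa_rel_def P_def by blast
  have fsP: "fs \<noteq> []" "sorted_wrt (\<lambda>a b. b \<subset> a) fs" "set fs \<subseteq> P" and tlI: "set (tl fs) \<subseteq> I"
    using fsII unfolding IIset_def flags_def by auto
  obtain f1 gs where fs: "fs = f1 # gs" using fsP(1) by (cases fs) auto
  have gsort: "sorted_wrt (\<lambda>a b. b \<subset> a) gs" and f1g: "\<And>g. g \<in> set gs \<Longrightarrow> g \<subset> f1"
    using fsP(2) unfolding fs by auto
  have gsI: "set gs \<subseteq> I" using tlI unfolding fs by simp
  have gflag: "gs \<in> flags I" if "gs \<noteq> []" using that gsort gsI unfolding flags_def by auto
  have gP: "g \<in> P" "g \<noteq> UNIV" "subspace g" if "g \<in> set gs" for g
    using that gsI IP UI Psub by auto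
  have epsL: "\<epsilon> ^ L \<le> 1" using eps by (simp add: power_le_one)
  show ?thesis
  proof (cases "f1 = UNIV")
    case True
    have "gs \<noteq> []"
    proof
      assume "gs = []"
      hence "A \<in> B UNIV" using Abf True unfolding fs butterfly_def by simp
      thus False using B_D[OF BB] unfolding Dset_def by blast
    qed
    hence Ahull: "A \<in> convex hull (chibar ` set gs)"
      using Abf True unfolding fs butterfly_def chihull_def by simp
    define C where "C = chibar (hd gs)"
    have hdset: "hd gs \<in> set gs" using \<open>gs \<noteq> []\<close> by simp
    have CB: "C \<in> B (hd gs)" unfolding C_def
      using B_chi[OF BB lie aut _ _ order_refl] gP[OF hdset] unfolding P_def by blast
    have "chibar ` set gs \<subseteq> insert C {chibar (gs ! s) | s. 1 \<le> s \<and> s < length gs}"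
    proof
      fix y assume "y \<in> chibar ` set gs"
      then obtain i where i: "i < length gs" "y = chibar (gs ! i)" by (auto simp: in_set_conv_nth)
      show "y \<in> insert C {chibar (gs ! s) | s. 1 \<le> s \<and> s < length gs}"
      proof (cases "i = 0")
        case True thus ?thesis using i \<open>gs \<noteq> []\<close> unfolding C_def by (simp add: hd_conv_nth)
      next
        case False thus ?thesis using i by auto
      qed
    qed
    hence "A \<in> convex hull (insert C {chibar (gs ! s) | s. 1 \<le> s \<and> s < length gs})"
      using Ahull hull_mono by blast
    moreover have "opnorm2 (C - chibar (hd gs)) < \<epsilon>" unfolding C_def using eps by (simp add: opn_zero)
    ultimately show ?thesis using gflag[OF \<open>gs \<noteq> []\<close>] CB \<open>gs \<noteq> []\<close> by (intro bexI[of _ gs]) auto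
  next
    case f1U: False
    have "gs \<noteq> []"
    proof
      assume "gs = []"
      hence "t = 1" using cond f1U unfolding fs by simp
      thus False using assms(11) epsL by simp
    qed
    define m where "m = length gs"
    have m1: "1 \<le> m" unfolding m_def using \<open>gs \<noteq> []\<close> by (cases gs) auto
    have mL: "m \<le> L" unfolding m_def using assms(9) gflag[OF \<open>gs \<noteq> []\<close>] by blast
    define g where "g i = gs ! i" for i
    have gi: "g i \<in> P" "g i \<noteq> UNIV" "subspace (g i)" "g i \<subseteq> f1" if "i < m" for i
      using gP[of "g i"] f1g[of "g i"] that unfolding g_def m_def by (auto simp: nth_mem)
    have gmono: "g j \<subseteq> g i" if "i \<le> j" "j < m" for i j
      using flag_nth[OF gsort that[unfolded m_def]] unfolding g_def .
    have f1P: "f1 \<in> P" using fsP(3) unfolding fs by simp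
    have sf1: "subspace f1" using Psub[OF f1P] .
    obtain A1 A2 where A1: "A1 \<in> chihull gs" and A2: "A2 \<in> B f1" and AA: "A = (1 - t) *\<^sub>R A1 + t *\<^sub>R A2"
      using cond f1U \<open>gs \<noteq> []\<close> unfolding fs by auto
    obtain P1 P2 u where P1: "P1 \<in> B f1" and P2: "P2 \<in> chihull gs" and u: "0 \<le> u" "u \<le> 1"
      and AP: "A = (1 - u) *\<^sub>R P1 + u *\<^sub>R P2"
      using Abf f1U \<open>gs \<noteq> []\<close> unfolding fs butterfly_def closed_segment_def by auto
    have "0 < length gs" using \<open>gs \<noteq> []\<close> by simp
    hence "gs ! 0 \<in> set gs" by (rule nth_mem)
    hence g0: "g 0 \<subset> f1" using f1g unfolding g_def by blast
    then obtain x0 where x0: "x0 \<in> f1" "x0 \<notin> g 0" by blast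
    define v0 where "v0 = x0 - projop (g 0) x0"
    have sg0: "subspace (g 0)" using gi m1 by simp
    have v0ne: "v0 \<noteq> 0" unfolding v0_def using x0 P_in[OF sg0, of x0] by auto
    have v0f: "v0 \<in> f1" unfolding v0_def using x0 P_in[OF sg0, of x0] g0 sf1 by (auto intro: subspace_diff)
    have v0o: "inner v0 z = 0" if "z \<in> g 0" for z unfolding v0_def using P_orth[OF sg0 that] .
    define v where "v = v0 /\<^sub>R norm v0"
    have "norm v = 1" unfolding v_def using v0ne by simp
    hence vv: "inner v v = 1" using norm_eq_1 by blast
    have vf: "v \<in> f1" unfolding v_def using v0f sf1 by (simp add: subspace_scale)
    have vo: "inner v z = 0" if "z \<in> g 0" for z unfolding v_def using v0o[OF that] by simp
    define \<psi> where "\<psi> = psi f1 v"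
    have psiB: "\<psi> Y = 1" if "Y \<in> B f1" for Y unfolding \<psi>_def using psi_D[OF B_D[OF BB that] sf1 vf] .
    have psiH: "\<psi> Y = 0" if "Y \<in> chihull gs" for Y
    proof -
      have "chibar ` set gs \<subseteq> {Y. \<psi> Y = 0}"
      proof
        fix y assume "y \<in> chibar ` set gs"
        then obtain i where i: "i < m" "y = chibar (g i)" unfolding m_def g_def by (auto simp: in_set_conv_nth)
        have "\<psi> (chibar (g i)) = 0" unfolding \<psi>_def
        proof (rule psi_chi[OF sf1 f1U gi(3)[OF i(1)] gi(2)[OF i(1)] gi(4)[OF i(1)] vv])
          fix z assume "z \<in> g i"
          hence "z \<in> g 0" using gmono[of 0 i] i by auto
          thus "inner v z = 0" by (rule vo)
        qed
        thus "y \<in> {Y. \<psi> Y = 0}" using i by simp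
      qed
      moreover have "convex {Y. \<psi> Y = 0}" unfolding convex_def \<psi>_def by (simp add: psi_lin)
      ultimately have "convex hull (chibar ` set gs) \<subseteq> {Y. \<psi> Y = 0}" by (rule hull_minimal)
      thus ?thesis using that unfolding chihull_def by blast
    qed
    have "\<psi> A = t" unfolding AA \<psi>_def psi_lin using psiH[OF A1] psiB[OF A2] unfolding \<psi>_def by simp
    moreover have "\<psi> A = 1 - u" unfolding AP \<psi>_def psi_lin using psiH[OF P2] psiB[OF P1] unfolding \<psi>_def by simp
    ultimately have tu: "t = 1 - u" by simp
    have t0: "0 \<le> t" and t1: "t \<le> 1" using tu u by auto
    have "A1 \<in> convex hull (set (map chibar gs))" using A1 unfolding chihull_def by simp
    from hull_list[OF this] obtain l where l0: "\<And>i. i < m \<Longrightarrow> 0 \<le> l i" and l1: "(\<Sum>i<m. l i) = 1"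
      and lA: "A1 = (\<Sum>i<m. l i *\<^sub>R chibar (g i))" unfolding m_def g_def by auto
    define \<mu> where "\<mu> i = (1 - t) * l i" for i
    have \<mu>0: "0 \<le> \<mu> i" if "i < m" for i unfolding \<mu>_def using l0[OF that] t1 by simp
    define S where "S k = t + (\<Sum>i<k. \<mu> i)" for k
    have Sm: "S m = 1" unfolding S_def \<mu>_def using l1 by (simp add: sum_distrib_left[symmetric])
    have S0: "S 0 = t" unfolding S_def by simp
    have SSuc: "S (Suc k) = S k + \<mu> k" for k unfolding S_def by simp
    have Snn: "0 \<le> S k" if "k \<le> m" for k unfolding S_def using t0 \<mu>0 that by (auto intro!: add_nonneg_nonneg sum_nonneg)
    have AS: "A = t *\<^sub>R A2 + (\<Sum>i<m. \<mu> i *\<^sub>R chibar (g i))"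
      unfolding AA lA \<mu>_def by (simp add: scaleR_sum_right)
    obtain k where km: "k < m" and kS: "S k < \<epsilon> * S (Suc k)"
    proof -
     have "\<exists>k<m. S k < \<epsilon> * S (Suc k)"
     proof (rule ccontr)
      assume N: "\<not> (\<exists>k<m. S k < \<epsilon> * S (Suc k))"
      have H: "\<epsilon> * S (Suc k) \<le> S k" if "k < m" for k using that N by (meson not_le)
      have "\<epsilon> ^ k * S k \<le> t" if "k \<le> m" for k
        using that
      proof (induction k)
        case 0 thus ?case using S0 by simp
      next
        case (Suc k)
        have "\<epsilon> ^ Suc k * S (Suc k) = \<epsilon> ^ k * (\<epsilon> * S (Suc k))" by simp
        also have "\<dots> \<le> \<epsilon> ^ k * S k" using H[of k] Suc.prems eps by (intro mult_left_mono) auto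
        also have "\<dots> \<le> t" using Suc by simp
        finally show ?case .
      qed
      from this[of m] have "\<epsilon> ^ m \<le> t" using Sm by simp
      moreover have "\<epsilon> ^ L \<le> \<epsilon> ^ m" using mL eps by (intro power_decreasing) auto
      ultimately show False using assms(11) by simp
     qed
     then obtain k where "k < m" "S k < \<epsilon> * S (Suc k)" by blast
     thus ?thesis by (rule that)
    qed
    define s1 where "s1 = S (Suc k)"
    have "0 < \<epsilon> * S (Suc k)" using kS Snn[of k] km by linarith
    hence s1p: "0 < s1" unfolding s1_def using eps by (simp add: zero_less_mult_iff)
    define w' where "w' j = (if j = 0 then t else \<mu> (j - 1))" for j
    define w where "w j = w' j / s1" for j
    define Y where "Y j = (if j = 0 then A2 else chibar (g (j - 1)))" for j
    define J where "J = {..Suc k}"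
    have w'sum: "(\<Sum>j\<le>n. w' j) = S n" for n
      by (induction n) (simp_all add: w'_def S0 SSuc)
    have wsum: "(\<Sum>j\<in>J. w j) = 1" unfolding J_def w_def
      using w'sum[of "Suc k"] s1p by (simp add: sum_divide_distrib[symmetric] s1_def)
    have w0: "0 \<le> w j" if "j \<in> J" for j
    proof -
      have "0 \<le> w' j" using that t0 \<mu>0[of "j - 1"] km unfolding w'_def J_def by auto
      thus ?thesis unfolding w_def using s1p by simp
    qed
    have gkP: "g k \<in> Pset br Aut h" using gi(1)[OF km] unfolding P_def .
    have YB: "Y j \<in> B (g k)" if "j \<in> J" for j
    proof (cases "j = 0")
      case True thus ?thesis unfolding Y_def using B_mono[OF BB A2 gi(4)[OF km] gi(2)[OF km]] by simp
    next
      case False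
      hence j1: "j - 1 \<le> k" using that unfolding J_def by auto
      hence j1m: "j - 1 < m" using km by simp
      have "chibar (g (j - 1)) \<in> B (g k)"
        using B_chi[OF BB lie aut _ gi(2)[OF j1m] gmono[OF j1 km] gi(2)[OF km]] gi(1)[OF j1m]
        unfolding P_def by blast
      thus ?thesis unfolding Y_def using False by simp
    qed
    have A2D: "A2 \<in> Dset br Aut f1" by (rule B_D[OF BB A2])
    have Ycm: "Y i (Y i' x) = Y i' (Y i x)" if "i \<in> J" "i' \<in> J" for i i' x
    proof -
      have im: "i - 1 < m" "i' - 1 < m" using that km unfolding J_def by auto
      show ?thesis
      proof (cases "i = 0")
        case True
        show ?thesis
        proof (cases "i' = 0")
          case True thus ?thesis using \<open>i = 0\<close> by simp
        next
          case False thus ?thesis unfolding Y_def using True comm_D[OF A2D gi(3)[OF im(2)] gi(4)[OF im(2)]] by simp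
        qed
      next
        case False
        show ?thesis
        proof (cases "i' = 0")
          case True thus ?thesis unfolding Y_def using False comm_D[OF A2D gi(3)[OF im(1)] gi(4)[OF im(1)]] by simp
        next
          case F2: False
          have "g (i - 1) \<subseteq> g (i' - 1) \<or> g (i' - 1) \<subseteq> g (i - 1)"
            using gmono im by (metis nat_le_linear)
          thus ?thesis unfolding Y_def using False F2 comm_chi[OF gi(3)[OF im(1)] gi(3)[OF im(2)]] by simp
        qed
      qed
    qed
    define C where "C = (\<Sum>j\<in>J. w j *\<^sub>R Y j)"
    have CB: "C \<in> B (g k)" unfolding C_def
      by (rule B_comb[OF BB lie _ YB w0 wsum Ycm]) (auto simp: J_def)
    have sgk: "subspace (g k)" using gi(3)[OF km] .
    have symD: "symmetric_op (Y j - chibar (g k))" if "j \<in> J" for j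
    proof -
      have "symmetric_op (Y j)" using B_D[OF BB YB[OF that]] unfolding Dset_def by blast
      moreover have "symmetric_op ((-1) *\<^sub>R chibar (g k))" using chibar_sym[OF sgk] by (rule sym_scale)
      ultimately have "symmetric_op (Y j + (-1) *\<^sub>R chibar (g k))" by (rule sym_add)
      thus ?thesis by simp
    qed
    have Cdiff: "C - chibar (g k) = (\<Sum>j\<in>J. w j *\<^sub>R (Y j - chibar (g k)))"
    proof -
      have "(\<Sum>j\<in>J. w j *\<^sub>R chibar (g k)) = chibar (g k)" using wsum by (simp add: scaleR_sum_left[symmetric])
      thus ?thesis unfolding C_def by (simp add: scaleR_diff_right sum_subtractf)
    qed
    have "opnorm2 (C - chibar (g k)) \<le> (\<Sum>j\<in>J. opnorm2 (w j *\<^sub>R (Y j - chibar (g k))))"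
      unfolding Cdiff using symD sym_scale by (intro opn_sum) (auto simp: J_def)
    also have "\<dots> \<le> (\<Sum>j\<in>J. if j = Suc k then 0 else w j)"
    proof (rule sum_mono)
      fix j assume j: "j \<in> J"
      have e: "opnorm2 (w j *\<^sub>R (Y j - chibar (g k))) = w j * opnorm2 (Y j - chibar (g k))"
        using opn_scale[OF symD[OF j]] w0[OF j] by simp
      show "opnorm2 (w j *\<^sub>R (Y j - chibar (g k))) \<le> (if j = Suc k then 0 else w j)"
      proof (cases "j = Suc k")
        case True thus ?thesis unfolding e Y_def by (simp add: opn_zero)
      next
        case False
        have "opnorm2 (Y j - chibar (g k)) \<le> 1" by (rule bound_chi[OF B_D[OF BB YB[OF j]] sgk])
        hence "w j * opnorm2 (Y j - chibar (g k)) \<le> w j * 1" using w0[OF j] by (rule mult_left_mono)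
        thus ?thesis unfolding e using False by simp
      qed
    qed
    also have "\<dots> = (\<Sum>j\<le>k. w j)" unfolding J_def by simp
    also have "\<dots> = S k / s1" unfolding w_def using w'sum[of k] by (simp add: sum_divide_distrib[symmetric])
    also have "\<dots> < \<epsilon>" using kS s1p unfolding s1_def by (simp add: divide_less_eq)
    finally have normC: "opnorm2 (C - chibar (g k)) < \<epsilon>" .
    define fs' where "fs' = drop k gs"
    have fs'I: "fs' \<in> flags I" unfolding fs'_def flags_def using km gsort gsI set_drop_subset[of k gs]
      unfolding m_def by auto
    have hdfs': "hd fs' = g k" unfolding fs'_def g_def using km unfolding m_def by (simp add: hd_drop_conv_nth)
    have lfs': "length fs' = m - k" unfolding fs'_def m_def by simp
    define T where "T = insert C {chibar (fs' ! s) | s. 1 \<le> s \<and> s < length fs'}"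
    define R where "R = {Suc k..<m}"
    define a where "a i = (if i = k then s1 else \<mu> i)" for i
    define yy where "yy i = (if i = k then C else chibar (g i))" for i
    have kR: "k \<notin> R" unfolding R_def by simp
    have s1C: "s1 *\<^sub>R C = t *\<^sub>R A2 + (\<Sum>i<Suc k. \<mu> i *\<^sub>R chibar (g i))"
    proof -
      have "s1 *\<^sub>R C = (\<Sum>j\<le>Suc k. s1 *\<^sub>R ((w' j / s1) *\<^sub>R Y j))"
        unfolding C_def J_def w_def by (rule scaleR_sum_right)
      also have "\<dots> = (\<Sum>j\<le>Suc k. w' j *\<^sub>R Y j)" using s1p by (intro sum.cong refl) simp
      also have "\<dots> = w' 0 *\<^sub>R Y 0 + (\<Sum>i\<le>k. w' (Suc i) *\<^sub>R Y (Suc i))" by (rule sum.atMost_Suc_shift)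
      also have "\<dots> = t *\<^sub>R A2 + (\<Sum>i<Suc k. \<mu> i *\<^sub>R chibar (g i))"
        unfolding w'_def Y_def by (simp add: lessThan_Suc_atMost)
      finally show ?thesis .
    qed
    have split: "{..<m} = {..<Suc k} \<union> R" "{..<Suc k} \<inter> R = {}" unfolding R_def using km by auto
    have AK: "A = (\<Sum>i\<in>insert k R. a i *\<^sub>R yy i)"
    proof -
      have "(\<Sum>i\<in>insert k R. a i *\<^sub>R yy i) = s1 *\<^sub>R C + (\<Sum>i\<in>R. \<mu> i *\<^sub>R chibar (g i))"
        using kR unfolding R_def a_def yy_def by (simp add: R_def)
      also have "\<dots> = t *\<^sub>R A2 + ((\<Sum>i<Suc k. \<mu> i *\<^sub>R chibar (g i)) + (\<Sum>i\<in>R. \<mu> i *\<^sub>R chibar (g i)))"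
        unfolding s1C by simp
      also have "(\<Sum>i<Suc k. \<mu> i *\<^sub>R chibar (g i)) + (\<Sum>i\<in>R. \<mu> i *\<^sub>R chibar (g i)) = (\<Sum>i<m. \<mu> i *\<^sub>R chibar (g i))"
        unfolding split(1) by (rule sum.union_disjoint[symmetric]) (auto simp: R_def split(2))
      finally show ?thesis using AS by simp
    qed
    have aK: "(\<Sum>i\<in>insert k R. a i) = 1"
    proof -
      have "(\<Sum>i\<in>insert k R. a i) = s1 + (\<Sum>i\<in>R. \<mu> i)"
        using kR unfolding R_def a_def by (simp add: R_def)
      also have "\<dots> = t + ((\<Sum>i<Suc k. \<mu> i) + (\<Sum>i\<in>R. \<mu> i))" unfolding s1_def S_def by simp
      also have "(\<Sum>i<Suc k. \<mu> i) + (\<Sum>i\<in>R. \<mu> i) = (\<Sum>i<m. \<mu> i)"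
        unfolding split(1) by (rule sum.union_disjoint[symmetric]) (auto simp: R_def split(2))
      finally show ?thesis using Sm unfolding S_def by simp
    qed
    have a0: "0 \<le> a i" if "i \<in> insert k R" for i
      using that s1p \<mu>0 unfolding a_def R_def by auto
    have yyT: "yy i \<in> convex hull T" if "i \<in> insert k R" for i
    proof -
      have "yy i \<in> T"
      proof (cases "i = k")
        case True thus ?thesis unfolding yy_def T_def by simp
      next
        case False
        hence i: "Suc k \<le> i" "i < m" using that unfolding R_def by auto
        have e1: "fs' ! (i - k) = g i" unfolding fs'_def g_def using i km unfolding m_def by simp
        have e2: "1 \<le> i - k" "i - k < length fs'" using i unfolding lfs' by auto
        have "chibar (g i) \<in> {chibar (fs' ! s) |s. 1 \<le> s \<and> s < length fs'}"
          unfolding mem_Collect_eq using e1 e2 by (intro exI[of _ "i - k"]) auto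
        thus ?thesis unfolding yy_def T_def using False by simp
      qed
      thus ?thesis by (rule hull_inc)
    qed
    have "A \<in> convex hull T" unfolding AK
      by (rule convex_sum[OF _ convex_convex_hull aK a0 yyT]) (simp add: R_def)
    thus ?thesis using fs'I CB normC hdfs' lfs' km unfolding T_def
      by (intro bexI[of _ fs']) auto
  qed
qed


end
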